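(* Let $A, B_1, \ldots, B_m \in \mathbb{C}^{d\times d}$. Define the $d^2\times d^2$ matrices \[ D_{A,B}=\overline{A}\otimes A+\sum_{k=1}^m \overline{B}_k\otimes B_k,\qquad C_{A,B}=\overline{A}\otimes I+I\otimes A+\sum_{k=1}^m \overline{B}_k\otimes B_k, \] and the $d\times d$ Hermitian matrices \[ N_{A,B}=A^*A+\sum_{k=1}^m B_k^*B_k,\qquad M_{A,B}=A+A^*+\sum_{k=1}^m B_k^*B_k. \] Then \[ \varrho(N_{A,B})\le \rho(D_{A,B})\le \alpha(N_{A,B}),\qquad \varrho(M_{A,B})\le \alpha(C_{A,B})\le \alpha(M_{A,B}). \]
   Context: For a matrix $X$, $\overline{X}$ is the entrywise complex conjugate, $X^*$ the conjugate transpose, $I$ the identity matrix, and $\otimes$ the Kronecker product ($X\otimes Y$ is the block matrix with blocks $X_{ij}Y$). For a square matrix $X$: $\rho(X)=\max\{|\lambda|:\lambda \text{ eigenvalue of } X\}$ (spectral radius), $\alpha(X)=\max\{\operatorname{Re}\lambda:\lambda \text{ eigenvalue of } X\}$ (spectral abscissa), and $\varrho(X)=\min\{\operatorname{Re}\lambda:\lambda \text{ eigenvalue of } X\}$. For a Hermitian matrix, $\varrho$ and $\alpha$ are its smallest and largest eigenvalues. *)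

theory Defs
  imports "Jordan_Normal_Form.Spectral_Radius" "Jordan_Normal_Form.Schur_Decomposition"
begin

definition mat_conj :: "complex mat \<Rightarrow> complex mat" where
  "mat_conj A = mat (dim_row A) (dim_col A) (\<lambda>(i,j). cnj (A $$ (i,j)))"

definition kron :: "complex mat \<Rightarrow> complex mat \<Rightarrow> complex mat" where
  "kron X Y = mat (dim_row X * dim_row Y) (dim_col X * dim_col Y)
     (\<lambda>(i,j). X $$ (i div dim_row Y, j div dim_col Y) * Y $$ (i mod dim_row Y, j mod dim_col Y))"

definition spectral_abscissa :: "complex mat \<Rightarrow> real" where
  "spectral_abscissa A = Max (Re ` spectrum A)"

definition spectral_min_re :: "complex mat \<Rightarrow> real" where
  "spectral_min_re A = Min (Re ` spectrum A)"

definition msum :: "nat \<Rightarrow> (nat \<Rightarrow> complex mat) \<Rightarrow> nat set \<Rightarrow> complex mat" where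
  "msum n f K = mat n n (\<lambda>ij. \<Sum>k\<in>K. f k $$ ij)"

end

theory Submission
  imports Defs "HOL-Analysis.L2_Norm"
begin



definition qf :: "nat \<Rightarrow> complex mat \<Rightarrow> (nat\<Rightarrow>complex) \<Rightarrow> (nat\<Rightarrow>complex) \<Rightarrow> complex" where
 "qf d Y a b = (\<Sum>i<d. \<Sum>j<d. cnj (a i) * Y$$(i,j) * b j)"
definition nsq :: "nat \<Rightarrow> (nat\<Rightarrow>complex) \<Rightarrow> real" where
 "nsq d a = (\<Sum>i<d. (cmod (a i))\<^sup>2)"
definition mv :: "nat \<Rightarrow> complex mat \<Rightarrow> (nat\<Rightarrow>complex) \<Rightarrow> nat \<Rightarrow> complex" where
 "mv d K a = (\<lambda>i. \<Sum>j<d. K$$(i,j) * a j)"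
definition bnd :: "nat \<Rightarrow> complex mat \<Rightarrow> real \<Rightarrow> bool" where
 "bnd d Y c \<longleftrightarrow> (\<forall>a b. cmod (qf d Y a b) \<le> c * sqrt (nsq d a) * sqrt (nsq d b))"
definition Lst :: "nat \<Rightarrow> (nat \<Rightarrow> complex mat) \<Rightarrow> nat set \<Rightarrow> complex mat \<Rightarrow> nat \<Rightarrow> nat \<Rightarrow> complex" where
 "Lst d F S Y i j = (\<Sum>k\<in>S. \<Sum>p<d. \<Sum>q<d. cnj (F k$$(p,i)) * Y$$(p,q) * F k$$(q,j))"

lemma swap4: "(\<Sum>p\<in>P. \<Sum>q\<in>Q. \<Sum>i\<in>I. \<Sum>j\<in>J. f p q i j) = (\<Sum>i\<in>I. \<Sum>j\<in>J. \<Sum>p\<in>P. \<Sum>q\<in>Q. f p q i j)"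
proof -
  have "(\<Sum>p\<in>P. \<Sum>q\<in>Q. \<Sum>i\<in>I. \<Sum>j\<in>J. f p q i j) = (\<Sum>p\<in>P. \<Sum>i\<in>I. \<Sum>q\<in>Q. \<Sum>j\<in>J. f p q i j)"
    by (rule sum.cong[OF refl], rule sum.swap)
  also have "\<dots> = (\<Sum>i\<in>I. \<Sum>p\<in>P. \<Sum>q\<in>Q. \<Sum>j\<in>J. f p q i j)" by (rule sum.swap)
  also have "\<dots> = (\<Sum>i\<in>I. \<Sum>p\<in>P. \<Sum>j\<in>J. \<Sum>q\<in>Q. f p q i j)"
    by (rule sum.cong[OF refl], rule sum.cong[OF refl], rule sum.swap)
  also have "\<dots> = (\<Sum>i\<in>I. \<Sum>j\<in>J. \<Sum>p\<in>P. \<Sum>q\<in>Q. f p q i j)"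
    by (rule sum.cong[OF refl], rule sum.swap)
  finally show ?thesis .
qed

lemma swap3: "(\<Sum>k\<in>K. \<Sum>i\<in>I. \<Sum>j\<in>J. f k i j) = (\<Sum>i\<in>I. \<Sum>j\<in>J. \<Sum>k\<in>K. f k i j)"
proof -
  have "(\<Sum>k\<in>K. \<Sum>i\<in>I. \<Sum>j\<in>J. f k i j) = (\<Sum>i\<in>I. \<Sum>k\<in>K. \<Sum>j\<in>J. f k i j)" by (rule sum.swap)
  also have "\<dots> = (\<Sum>i\<in>I. \<Sum>j\<in>J. \<Sum>k\<in>K. f k i j)" by (rule sum.cong[OF refl], rule sum.swap)
  finally show ?thesis .
qed

lemma qf_Lst: "(\<Sum>k\<in>S. qf d Y (mv d (F k) a) (mv d (F k) b))
   = (\<Sum>i<d. \<Sum>j<d. cnj(a i) * Lst d F S Y i j * b j)"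
proof -
  have "(\<Sum>k\<in>S. qf d Y (mv d (F k) a) (mv d (F k) b))
     = (\<Sum>k\<in>S. \<Sum>p<d. \<Sum>q<d. \<Sum>i<d. \<Sum>j<d. cnj (a i) * (cnj (F k$$(p,i)) * Y$$(p,q) * F k$$(q,j)) * b j)"
    unfolding qf_def mv_def
    by (simp add: sum_distrib_left sum_distrib_right mult_ac)
  also have "\<dots> = (\<Sum>k\<in>S. \<Sum>i<d. \<Sum>j<d. \<Sum>p<d. \<Sum>q<d. cnj (a i) * (cnj (F k$$(p,i)) * Y$$(p,q) * F k$$(q,j)) * b j)"
    by (rule sum.cong[OF refl], rule swap4)
  also have "\<dots> = (\<Sum>i<d. \<Sum>j<d. \<Sum>k\<in>S. \<Sum>p<d. \<Sum>q<d. cnj (a i) * (cnj (F k$$(p,i)) * Y$$(p,q) * F k$$(q,j)) * b j)"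
    by (rule swap3)
  also have "\<dots> = (\<Sum>i<d. \<Sum>j<d. cnj(a i) * Lst d F S Y i j * b j)"
    unfolding Lst_def
    by (intro sum.cong refl, simp add: sum_distrib_left sum_distrib_right)
  finally show ?thesis .
qed



lemma nsq_nonneg: "nsq d a \<ge> 0" unfolding nsq_def by (intro sum_nonneg, simp)

lemma cs_sum: "cmod (\<Sum>i<d. cnj (u i) * v i) \<le> sqrt (nsq d u) * sqrt (nsq d v)"
proof -
  have "cmod (\<Sum>i<d. cnj (u i) * v i) \<le> (\<Sum>i<d. cmod (cnj (u i) * v i))" by (rule norm_sum)
  also have "\<dots> = (\<Sum>i<d. \<bar>cmod (u i)\<bar> * \<bar>cmod (v i)\<bar>)" by (simp add: norm_mult)
  also have "\<dots> \<le> L2_set (\<lambda>i. cmod (u i)) {..<d} * L2_set (\<lambda>i. cmod (v i)) {..<d}"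
    by (rule L2_set_mult_ineq)
  also have "\<dots> = sqrt (nsq d u) * sqrt (nsq d v)" unfolding L2_set_def nsq_def by simp
  finally show ?thesis .
qed

lemma cs_real: fixes f g :: "'b \<Rightarrow> real" assumes "finite S" "\<And>k. k \<in> S \<Longrightarrow> f k \<ge> 0" "\<And>k. k \<in> S \<Longrightarrow> g k \<ge> 0"
  shows "(\<Sum>k\<in>S. sqrt (f k) * sqrt (g k)) \<le> sqrt (\<Sum>k\<in>S. f k) * sqrt (\<Sum>k\<in>S. g k)"
proof -
  have "(\<Sum>k\<in>S. sqrt (f k) * sqrt (g k)) = (\<Sum>k\<in>S. \<bar>sqrt (f k)\<bar> * \<bar>sqrt (g k)\<bar>)"
    using assms by (intro sum.cong refl) auto
  also have "\<dots> \<le> L2_set (\<lambda>k. sqrt (f k)) S * L2_set (\<lambda>k. sqrt (g k)) S" by (rule L2_set_mult_ineq)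
  also have "\<dots> = sqrt (\<Sum>k\<in>S. f k) * sqrt (\<Sum>k\<in>S. g k)"
  proof -
    have "(\<Sum>k\<in>S. (sqrt (f k))\<^sup>2) = (\<Sum>k\<in>S. f k)" "(\<Sum>k\<in>S. (sqrt (g k))\<^sup>2) = (\<Sum>k\<in>S. g k)"
      using assms by (auto intro!: sum.cong)
    thus ?thesis unfolding L2_set_def by simp
  qed
  finally show ?thesis .
qed

lemma qf_one: "qf d (1\<^sub>m d) u v = (\<Sum>i<d. cnj (u i) * v i)"
  unfolding qf_def by (intro sum.cong refl, simp add: if_distrib if_distribR sum.delta cong: if_cong)

lemma qf_one_nsq: "qf d (1\<^sub>m d) u u = of_real (nsq d u)"
  unfolding qf_one nsq_def of_real_sum
  by (intro sum.cong refl) (metis complex_norm_square mult.commute)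


definition ev :: "nat \<Rightarrow> nat \<Rightarrow> complex" where "ev i = (\<lambda>k. if k = i then 1 else 0)"

lemma nsq_ev: assumes "i < d" shows "nsq d (ev i) = 1"
proof -
  have "nsq d (ev i) = (\<Sum>k<d. if k = i then 1 else 0)"
    unfolding nsq_def ev_def by (intro sum.cong refl, auto)
  thus ?thesis using assms by simp
qed

lemma sum_ev_r: assumes "j < d" shows "(\<Sum>b<d. f b * ev j b) = f j"
proof -
  have "(\<Sum>b<d. f b * ev j b) = (\<Sum>b<d. if b = j then f b else 0)"
    by (intro sum.cong refl) (simp add: ev_def)
  thus ?thesis using assms by simp
qed

lemma sum_ev_l: assumes "j < d" shows "(\<Sum>b<d. cnj (ev j b) * f b) = f j"
proof -
  have "(\<Sum>b<d. cnj (ev j b) * f b) = (\<Sum>b<d. if b = j then f b else 0)"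
    by (intro sum.cong refl) (simp add: ev_def)
  thus ?thesis using assms by simp
qed

lemma qf_ev: assumes "i < d" "j < d" shows "qf d Y (ev i) (ev j) = Y $$ (i,j)"
proof -
  have "qf d Y (ev i) (ev j) = (\<Sum>a<d. cnj (ev i a) * Y$$(a,j))"
    unfolding qf_def by (intro sum.cong refl) (rule sum_ev_r[OF assms(2)])
  also have "\<dots> = Y$$(i,j)" by (rule sum_ev_l[OF assms(1)])
  finally show ?thesis .
qed

lemma bnd_entry: assumes "bnd d Y c" "i < d" "j < d" shows "cmod (Y $$ (i,j)) \<le> c"
proof -
  have "cmod (qf d Y (ev i) (ev j)) \<le> c * sqrt (nsq d (ev i)) * sqrt (nsq d (ev j))"
    using assms(1) unfolding bnd_def by blast
  thus ?thesis using assms by (simp add: qf_ev nsq_ev)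
qed

lemma kraus_bound:
  assumes S: "finite S" and beta: "\<And>a. (\<Sum>k\<in>S. nsq d (mv d (F k) a)) \<le> \<beta> * nsq d a" "\<beta> \<ge> 0"
    and Y: "bnd d Y c" and c: "c \<ge> 0"
  shows "cmod (\<Sum>k\<in>S. qf d Y (mv d (F k) a) (mv d (F k) b)) \<le> c * \<beta> * sqrt (nsq d a) * sqrt (nsq d b)"
proof -
  have "cmod (\<Sum>k\<in>S. qf d Y (mv d (F k) a) (mv d (F k) b)) \<le> (\<Sum>k\<in>S. cmod (qf d Y (mv d (F k) a) (mv d (F k) b)))"
    by (rule norm_sum)
  also have "\<dots> \<le> (\<Sum>k\<in>S. c * (sqrt (nsq d (mv d (F k) a)) * sqrt (nsq d (mv d (F k) b))))"
    using Y unfolding bnd_def by (intro sum_mono, simp add: mult.assoc)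
  also have "\<dots> = c * (\<Sum>k\<in>S. sqrt (nsq d (mv d (F k) a)) * sqrt (nsq d (mv d (F k) b)))"
    by (simp add: sum_distrib_left)
  also have "\<dots> \<le> c * (sqrt (\<Sum>k\<in>S. nsq d (mv d (F k) a)) * sqrt (\<Sum>k\<in>S. nsq d (mv d (F k) b)))"
    by (rule mult_left_mono[OF cs_real c]) (auto simp: S nsq_nonneg)
  also have "\<dots> \<le> c * (sqrt (\<beta> * nsq d a) * sqrt (\<beta> * nsq d b))"
    by (intro mult_left_mono mult_mono real_sqrt_le_mono beta c, auto simp: nsq_nonneg beta(2) intro!: sum_nonneg)
  also have "sqrt (\<beta> * nsq d a) * sqrt (\<beta> * nsq d b) = (sqrt \<beta> * sqrt \<beta>) * (sqrt (nsq d a) * sqrt (nsq d b))"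
    by (simp add: real_sqrt_mult mult_ac)
  also have "sqrt \<beta> * sqrt \<beta> = \<beta>" using beta(2) by simp
  finally show ?thesis by (simp add: mult_ac)
qed


lemma coord_le: "i < d \<Longrightarrow> cmod (a i) \<le> sqrt (nsq d a)"
proof -
  assume i: "i < d"
  have "(cmod (a i))\<^sup>2 \<le> nsq d a" unfolding nsq_def
    using i by (intro member_le_sum, auto)
  thus ?thesis by (rule real_le_rsqrt)
qed

lemma term_le: assumes "i < d" "j < d"
  shows "cmod (cnj (a i) * Y$$(i,j) * b j) \<le> cmod (Y$$(i,j)) * (sqrt (nsq d a) * sqrt (nsq d b))"
proof -
  have "cmod (cnj (a i) * Y$$(i,j) * b j) = cmod (Y$$(i,j)) * (cmod (a i) * cmod (b j))"
    by (simp add: norm_mult)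
  also have "\<dots> \<le> cmod (Y$$(i,j)) * (sqrt (nsq d a) * sqrt (nsq d b))"
    by (rule mult_left_mono[OF mult_mono[OF coord_le[OF assms(1)] coord_le[OF assms(2)]]], auto simp: nsq_nonneg)
  finally show ?thesis .
qed

lemma bnd_init: "bnd d Y (\<Sum>i<d. \<Sum>j<d. cmod (Y $$ (i,j)))"
  unfolding bnd_def
proof (intro allI)
  fix a b
  have "cmod (qf d Y a b) \<le> (\<Sum>i<d. \<Sum>j<d. cmod (cnj (a i) * Y$$(i,j) * b j))"
    unfolding qf_def by (rule order.trans[OF norm_sum sum_mono], rule norm_sum)
  also have "\<dots> \<le> (\<Sum>i<d. \<Sum>j<d. cmod (Y$$(i,j)) * (sqrt (nsq d a) * sqrt (nsq d b)))"
    by (intro sum_mono term_le, auto)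
  also have "\<dots> = (\<Sum>i<d. \<Sum>j<d. cmod (Y $$ (i,j))) * sqrt (nsq d a) * sqrt (nsq d b)"
    by (simp add: sum_distrib_right mult.assoc)
  finally show "cmod (qf d Y a b) \<le> (\<Sum>i<d. \<Sum>j<d. cmod (Y $$ (i,j))) * sqrt (nsq d a) * sqrt (nsq d b)" .
qed

lemma bnd_nonneg_init: "(\<Sum>i<d. \<Sum>j<d. cmod (Y $$ (i,j))) \<ge> 0" by (intro sum_nonneg, auto)

lemma decay:
  assumes c0: "bnd d Y c0" "c0 \<ge> 0" and step: "\<And>c. c \<ge> 0 \<Longrightarrow> bnd d Y c \<Longrightarrow> bnd d Y (q * c)"
    and q: "0 \<le> q" "q < 1" and ij: "i < d" "j < d"
  shows "Y $$ (i,j) = 0"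
proof (rule ccontr)
  assume ne: "Y $$ (i,j) \<noteq> 0"
  have b: "bnd d Y (q^k * c0)" for k
    by (induct k, insert c0 step q, auto simp: mult.assoc)
  have le: "cmod (Y $$ (i,j)) \<le> q^k * c0" for k using bnd_entry[OF b ij] .
  have "(\<lambda>k. q^k * c0) \<longlonglongrightarrow> 0 * c0" by (intro tendsto_mult LIMSEQ_power_zero tendsto_const, insert q, auto)
  hence "\<forall>\<^sub>F k in sequentially. q^k * c0 < cmod (Y $$ (i,j))" using ne
    by (intro order_tendstoD(2), auto)
  hence "\<exists>k. q^k * c0 < cmod (Y $$ (i,j))" unfolding eventually_sequentially by auto
  then obtain k where "q^k * c0 < cmod (Y $$ (i,j))" by auto
  with le[of k] show False by linarith
qed


lemma mult_entry: assumes "A \<in> carrier_mat d d" "B \<in> carrier_mat d d" "i < d" "j < d"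
  shows "(A*B)$$(i,j) = (\<Sum>l<d. A$$(i,l) * B$$(l,j))"
  using assms by (simp add: scalar_prod_def atLeast0LessThan)

lemma mv_vec: assumes "A \<in> carrier_mat d d" "v \<in> carrier_vec d" "i < d"
  shows "(A *\<^sub>v v)$i = mv d A (($) v) i"
  using assms by (simp add: scalar_prod_def atLeast0LessThan mv_def)

lemma mv_mult: assumes "A \<in> carrier_mat d d" "B \<in> carrier_mat d d" "i < d"
  shows "mv d (A*B) a i = mv d A (mv d B a) i"
proof -
  have "mv d (A*B) a i = (\<Sum>j<d. \<Sum>l<d. A$$(i,l) * B$$(l,j) * a j)"
    unfolding mv_def using assms by (intro sum.cong refl) (simp add: scalar_prod_def atLeast0LessThan sum_distrib_right)
  also have "\<dots> = (\<Sum>l<d. \<Sum>j<d. A$$(i,l) * B$$(l,j) * a j)" by (rule sum.swap)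
  also have "\<dots> = mv d A (mv d B a) i" unfolding mv_def by (simp add: sum_distrib_left mult.assoc)
  finally show ?thesis .
qed

lemma mv_cong: "(\<And>j. j < d \<Longrightarrow> u j = w j) \<Longrightarrow> mv d A u i = mv d A w i"
  unfolding mv_def by (intro sum.cong refl) auto

lemma nsq_cong: "(\<And>j. j < d \<Longrightarrow> u j = w j) \<Longrightarrow> nsq d u = nsq d w"
  unfolding nsq_def by (intro sum.cong refl) auto

lemma pow_Suc': assumes "A \<in> carrier_mat n n" shows "A ^\<^sub>m Suc k = A * A ^\<^sub>m k"
proof (induct k)
  case 0 thus ?case using assms by simp
next
  case (Suc k)
  have "A ^\<^sub>m Suc (Suc k) = (A * A ^\<^sub>m k) * A" using Suc by simp
  also have "\<dots> = A * (A ^\<^sub>m k * A)" using assms by (intro assoc_mult_mat[of _ n n]) auto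
  finally show ?case by simp
qed

lemma smult_pow: fixes A :: "complex mat" assumes "A \<in> carrier_mat n n" shows "(a \<cdot>\<^sub>m A) ^\<^sub>m k = (a^k) \<cdot>\<^sub>m (A ^\<^sub>m k)"
proof (induct k)
  case 0 thus ?case using assms by (intro eq_matI) auto
next
  case (Suc k)
  have "(a \<cdot>\<^sub>m A) ^\<^sub>m Suc k = ((a^k) \<cdot>\<^sub>m (A ^\<^sub>m k)) * (a \<cdot>\<^sub>m A)" using Suc by simp
  also have "\<dots> = (a^k) \<cdot>\<^sub>m (A ^\<^sub>m k * (a \<cdot>\<^sub>m A))" by (rule mult_smult_assoc_mat) (use assms in auto)
  also have "\<dots> = (a^k) \<cdot>\<^sub>m (a \<cdot>\<^sub>m (A ^\<^sub>m k * A))" using assms by (subst mult_smult_distrib[of _ n n]) auto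
  also have "\<dots> = (a^Suc k) \<cdot>\<^sub>m (A ^\<^sub>m Suc k)" by (intro eq_matI) auto
  finally show ?case .
qed

lemma growth: assumes R: "R \<in> carrier_mat n n" and sr: "spectral_radius R < r" and r: "r > 0"
  shows "\<exists>c. \<forall>k i j. i < n \<longrightarrow> j < n \<longrightarrow> cmod ((R ^\<^sub>m k) $$ (i,j)) \<le> c * r^k"
proof (cases "n = 0")
  case True thus ?thesis by auto
next
  case False
  hence n: "n > 0" by auto
  define S where "S = (complex_of_real (1/r)) \<cdot>\<^sub>m R"
  have S: "S \<in> carrier_mat n n" unfolding S_def using R by auto
  have "spectral_radius S < 1"
  proof -
    from spectral_radius_mem_max(1)[OF S n] obtain \<nu> where nu: "\<nu> \<in> spectrum S" and eq: "spectral_radius S = norm \<nu>" by auto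
    from nu obtain v where ev: "eigenvector S v \<nu>" unfolding spectrum_def eigenvalue_def by auto
    hence v: "v \<in> carrier_vec n" "v \<noteq> 0\<^sub>v n" and Sv: "S *\<^sub>v v = \<nu> \<cdot>\<^sub>v v" using S unfolding eigenvector_def by auto
    have "R = complex_of_real r \<cdot>\<^sub>m S" unfolding S_def using r by (intro eq_matI) auto
    have "R *\<^sub>v v = (complex_of_real r * \<nu>) \<cdot>\<^sub>v v"
    proof (intro eq_vecI)
      fix i assume "i < dim_vec ((complex_of_real r * \<nu>) \<cdot>\<^sub>v v)"
      hence i: "i < n" using v by auto
      have "(S *\<^sub>v v) $ i = \<nu> * v $ i" using arg_cong[OF Sv, of "\<lambda>w. w $ i"] i v by auto
      moreover have "(R *\<^sub>v v) $ i = complex_of_real r * (S *\<^sub>v v) $ i"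
        using i S v \<open>R = _\<close> by (simp add: scalar_prod_def sum_distrib_left mult.assoc)
      ultimately show "(R *\<^sub>v v) $ i = ((complex_of_real r * \<nu>) \<cdot>\<^sub>v v) $ i" using i v by simp
    qed (use R v in auto)
    hence "eigenvector R v (complex_of_real r * \<nu>)" using v R unfolding eigenvector_def by auto
    hence "complex_of_real r * \<nu> \<in> spectrum R" unfolding spectrum_def eigenvalue_def by auto
    from spectral_radius_mem_max(2)[OF R n imageI[OF this, of norm]] sr
    have "norm (complex_of_real r * \<nu>) < r" by auto
    hence "r * norm \<nu> < r * 1" using r by (simp add: norm_mult)
    hence "norm \<nu> < 1" using r by simp
    thus ?thesis using eq by simp
  qed
  from spectral_radius_jnf_norm_bound_less_1_upper_triangular[OF S this]
  obtain c where c: "\<And>k. norm_bound (S ^\<^sub>m k) c" by auto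
  show ?thesis
  proof (intro exI allI impI)
    fix k i j assume ij: "i < n" "j < n"
    have "S ^\<^sub>m k = (complex_of_real (1/r) ^ k) \<cdot>\<^sub>m (R ^\<^sub>m k)" unfolding S_def by (rule smult_pow[OF R])
    hence "(S ^\<^sub>m k) $$ (i,j) = complex_of_real (1/r) ^ k * (R ^\<^sub>m k) $$ (i,j)" using ij R by simp
    hence "(R ^\<^sub>m k) $$ (i,j) = complex_of_real (r^k) * (S ^\<^sub>m k) $$ (i,j)" using r
      by (simp add: power_one_over field_simps)
    hence "cmod ((R ^\<^sub>m k) $$ (i,j)) = r^k * cmod ((S ^\<^sub>m k) $$ (i,j))" using r by (simp add: norm_mult norm_power)
    also have "\<dots> \<le> r^k * c" using c[of k] ij S unfolding norm_bound_def
      by (intro mult_left_mono) (auto simp: r less_imp_le)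
    finally show "cmod ((R ^\<^sub>m k) $$ (i,j)) \<le> c * r^k" by (simp add: mult.commute)
  qed
qed

lemma growth_vec: assumes R: "R \<in> carrier_mat n n" and sr: "spectral_radius R < r" and r: "r > 0"
  shows "\<exists>c. \<forall>k i. i < n \<longrightarrow> cmod (mv n (R ^\<^sub>m k) a i) \<le> c * r^k"
proof -
  from growth[OF assms] obtain c where c: "\<And>k i j. i < n \<Longrightarrow> j < n \<Longrightarrow> cmod ((R ^\<^sub>m k) $$ (i,j)) \<le> c * r^k" by blast
  define A where "A = (\<Sum>j<n. cmod (a j))"
  show ?thesis
  proof (intro exI allI impI)
    fix k i assume i: "i < n"
    have "cmod (mv n (R ^\<^sub>m k) a i) \<le> (\<Sum>j<n. cmod ((R ^\<^sub>m k) $$ (i,j) * a j))"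
      unfolding mv_def by (rule norm_sum)
    also have "\<dots> \<le> (\<Sum>j<n. c * r^k * cmod (a j))"
      by (intro sum_mono) (auto simp: norm_mult intro!: mult_right_mono c i)
    also have "\<dots> = A * c * r^k" unfolding A_def by (simp add: sum_distrib_left sum_distrib_right mult_ac)
    finally show "cmod (mv n (R ^\<^sub>m k) a i) \<le> (A * c) * r^k" by simp
  qed
qed


definition herm :: "nat \<Rightarrow> complex mat \<Rightarrow> bool" where
  "herm d X \<longleftrightarrow> (\<forall>i<d. \<forall>j<d. X$$(i,j) = cnj (X$$(j,i)))"

lemma ip_nsq: "complex_of_real (nsq d u) = (\<Sum>i<d. cnj (u i) * u i)"
  using qf_one_nsq[of d u] qf_one[of d u u] by simp

lemma qf_mv: "qf d X a b = (\<Sum>i<d. cnj (a i) * mv d X b i)"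
  unfolding qf_def mv_def by (simp add: sum_distrib_left mult.assoc)

lemma herm_swap: assumes "herm d X"
  shows "(\<Sum>i<d. cnj (mv d X u i) * w i) = (\<Sum>i<d. cnj (u i) * mv d X w i)"
proof -
  have c: "cnj (X$$(i,j)) = X$$(j,i)" if "i < d" "j < d" for i j
    using assms that unfolding herm_def by (metis complex_cnj_cnj)
  have "(\<Sum>i<d. cnj (mv d X u i) * w i) = (\<Sum>i<d. \<Sum>j<d. cnj (u j) * X$$(j,i) * w i)"
    unfolding mv_def
  proof (intro sum.cong refl)
    fix i assume i: "i \<in> {..<d}"
    have "cnj (\<Sum>j<d. X $$ (i, j) * u j) * w i = (\<Sum>j<d. cnj (X $$ (i, j)) * cnj (u j) * w i)"
      by (simp add: sum_distrib_right)
    also have "\<dots> = (\<Sum>j<d. cnj (u j) * X$$(j,i) * w i)"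
      by (intro sum.cong refl) (use i c in auto)
    finally show "cnj (\<Sum>j<d. X $$ (i, j) * u j) * w i = (\<Sum>j<d. cnj (u j) * X$$(j,i) * w i)" .
  qed
  also have "\<dots> = (\<Sum>j<d. \<Sum>i<d. cnj (u j) * X$$(j,i) * w i)" by (rule sum.swap)
  also have "\<dots> = (\<Sum>i<d. cnj (u i) * mv d X w i)" unfolding mv_def
    by (simp add: sum_distrib_left mult.assoc)
  finally show ?thesis .
qed

lemma nsq_zero: assumes "nsq d u = 0" "j < d" shows "u j = 0"
proof -
  have "\<forall>i\<in>{..<d}. (cmod (u i))\<^sup>2 = 0" using assms(1) unfolding nsq_def
    by (subst sum_nonneg_eq_0_iff[symmetric]) auto
  thus ?thesis using assms(2) by auto
qed

lemma herm_norm_bound: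
  assumes X: "X \<in> carrier_mat d d" and h: "herm d X" and d: "d > 0"
  shows "nsq d (mv d X a) \<le> (spectral_radius X)\<^sup>2 * nsq d a"
proof -
  define \<rho> where "\<rho> = spectral_radius X"
  have rho0: "\<rho> \<ge> 0" unfolding \<rho>_def using spectral_radius_mem_max(1)[OF X d] by auto
  define x where "x k = mv d (X ^\<^sub>m k) a" for k
  define s where "s k = nsq d (x k)" for k
  have x0: "x 0 i = a i" if "i < d" for i
  proof -
    have "x 0 i = (\<Sum>j<d. if j = i then a j else 0)" unfolding x_def mv_def using X that
      by (intro sum.cong refl) auto
    thus ?thesis using that by simp
  qed
  have xS: "x (Suc k) i = mv d X (x k) i" if "i < d" for k i
    unfolding x_def pow_Suc'[OF X] using mv_mult[OF X _ that] X by auto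
  have s0: "s 0 = nsq d a" unfolding s_def by (rule nsq_cong, rule x0)
  have s1: "s 1 = nsq d (mv d X a)" unfolding s_def
  proof (rule nsq_cong)
    fix i assume i: "i < d"
    have "x 1 i = mv d X (x 0) i" using xS[OF i, of 0] by simp
    also have "\<dots> = mv d X a i" by (rule mv_cong, rule x0)
    finally show "x 1 i = mv d X a i" .
  qed
  have s_nonneg: "s k \<ge> 0" for k unfolding s_def by (rule nsq_nonneg)
  have logc: "(s (Suc k))\<^sup>2 \<le> s k * s (Suc (Suc k))" for k
  proof -
    have "complex_of_real (s (Suc k)) = (\<Sum>i<d. cnj (x (Suc k) i) * x (Suc k) i)"
      unfolding s_def by (rule ip_nsq)
    also have "\<dots> = (\<Sum>i<d. cnj (mv d X (x k) i) * x (Suc k) i)" by (intro sum.cong refl, simp add: xS)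
    also have "\<dots> = (\<Sum>i<d. cnj (x k i) * mv d X (x (Suc k)) i)" by (rule herm_swap[OF h])
    also have "\<dots> = (\<Sum>i<d. cnj (x k i) * x (Suc (Suc k)) i)" by (intro sum.cong refl, simp add: xS)
    finally have "cmod (complex_of_real (s (Suc k))) = cmod (\<Sum>i<d. cnj (x k i) * x (Suc (Suc k)) i)"
      by simp
    hence "s (Suc k) = cmod (\<Sum>i<d. cnj (x k i) * x (Suc (Suc k)) i)" using s_nonneg[of "Suc k"] by simp
    also have "\<dots> \<le> sqrt (s k) * sqrt (s (Suc (Suc k)))" unfolding s_def by (rule cs_sum)
    finally have "s (Suc k) \<le> sqrt (s k * s (Suc (Suc k)))" by (simp add: real_sqrt_mult)
    hence "(s (Suc k))\<^sup>2 \<le> (sqrt (s k * s (Suc (Suc k))))\<^sup>2"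
      by (intro power_mono) (auto simp: s_nonneg)
    also have "\<dots> = s k * s (Suc (Suc k))" using s_nonneg[of k] s_nonneg[of "Suc (Suc k)"] by simp
    finally show ?thesis .
  qed
  have zero_prop: "s k = 0 \<Longrightarrow> s (Suc k) = 0" for k
  proof -
    assume "s k = 0"
    hence "x k j = 0" if "j < d" for j using nsq_zero that unfolding s_def by auto
    hence "x (Suc k) i = 0" if "i < d" for i using that unfolding xS[OF that] mv_def by simp
    thus "s (Suc k) = 0" unfolding s_def nsq_def by simp
  qed
  show ?thesis
  proof (cases "s 0 = 0")
    case True
    thus ?thesis using zero_prop[of 0] s0 s1 by simp
  next
    case False
    hence s0pos: "s 0 > 0" using s_nonneg[of 0] by auto
    define t where "t = s 1 / s 0"
    have t0: "t \<ge> 0" unfolding t_def using s_nonneg s0pos by auto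
    have step: "s (Suc k) \<ge> t * s k" for k
    proof (induct k)
      case 0 thus ?case using s0pos unfolding t_def by simp
    next
      case (Suc k)
      show ?case
      proof (cases "s (Suc k) = 0")
        case True thus ?thesis using zero_prop[of "Suc k"] by simp
      next
        case False
        hence sk: "s k > 0" using zero_prop[of k] s_nonneg[of k] by force
        have "s k * (t * s (Suc k)) = (t * s k) * s (Suc k)" by (simp add: mult_ac)
        also have "\<dots> \<le> s (Suc k) * s (Suc k)" by (rule mult_right_mono[OF Suc s_nonneg])
        also have "\<dots> \<le> s k * s (Suc (Suc k))" using logc[of k] by (simp add: power2_eq_square)
        finally show ?thesis using sk by simp
      qed
    qed
    have lower: "s k \<ge> t^k * s 0" for k
    proof (induct k)
      case (Suc k) 
      have "t^(Suc k) * s 0 = t * (t^k * s 0)" by simp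
      also have "\<dots> \<le> t * s k" using Suc t0 by (intro mult_left_mono)
      also have "\<dots> \<le> s (Suc k)" by (rule step)
      finally show ?case .
    qed simp
    have bound: "t \<le> r\<^sup>2" if r: "r > \<rho>" for r
    proof (rule ccontr)
      assume "\<not> t \<le> r\<^sup>2"
      hence tr: "t > r\<^sup>2" by simp
      have rpos: "r > 0" using r rho0 by simp
      from growth_vec[OF X r[unfolded \<rho>_def] rpos, of a]
      obtain c where c: "\<And>k i. i < d \<Longrightarrow> cmod (mv d (X ^\<^sub>m k) a i) \<le> c * r^k" by blast
      have sk: "s k \<le> (real d * c\<^sup>2) * (r\<^sup>2)^k" for k
      proof -
        have "s k = (\<Sum>i<d. (cmod (x k i))\<^sup>2)" unfolding s_def nsq_def by simp
        also have "\<dots> \<le> (\<Sum>i<d. (c * r^k)\<^sup>2)"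
          by (intro sum_mono power_mono) (auto simp: x_def c)
        also have "\<dots> = (real d * c\<^sup>2) * (r\<^sup>2)^k" by (simp add: power_mult_distrib power_mult[symmetric] mult.commute)
        finally show ?thesis .
      qed
      define q where "q = t / r\<^sup>2"
      have q1: "q > 1" unfolding q_def using tr rpos by simp
      from real_arch_pow[OF q1, of "(real d * c\<^sup>2) / s 0"] obtain k where
        k: "(real d * c\<^sup>2) / s 0 < q^k" by auto
      have tk: "t^k * s 0 \<le> (real d * c\<^sup>2) * (r\<^sup>2)^k" using lower[of k] sk[of k] by simp
      have pos: "(r\<^sup>2)^k > 0" using rpos by simp
      have "q^k * s 0 = (t^k * s 0) / (r\<^sup>2)^k" unfolding q_def by (simp add: power_divide)
      also have "\<dots> \<le> real d * c\<^sup>2" using tk pos by (simp add: divide_le_eq)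
      finally have "q^k * s 0 \<le> real d * c\<^sup>2" .
      moreover have "real d * c\<^sup>2 < q^k * s 0" using k s0pos by (simp add: divide_less_eq)
      ultimately show False by simp
    qed
    have "t \<le> \<rho>\<^sup>2"
    proof (rule ccontr)
      assume "\<not> t \<le> \<rho>\<^sup>2"
      hence "sqrt (\<rho>\<^sup>2) < sqrt t" by (intro real_sqrt_less_mono) simp
      hence "sqrt t > \<rho>" using rho0 by simp
      define r where "r = (\<rho> + sqrt t) / 2"
      have "r > \<rho>" "r < sqrt t" "r \<ge> 0" unfolding r_def using \<open>sqrt t > \<rho>\<close> rho0 by auto
      hence "r\<^sup>2 < (sqrt t)\<^sup>2" by (intro power_strict_mono) auto
      hence "r\<^sup>2 < t" using t0 by simp
      with bound[OF \<open>r > \<rho>\<close>] show False by simp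
    qed
    hence "s 1 \<le> \<rho>\<^sup>2 * s 0" unfolding t_def using s0pos by (simp add: field_simps)
    thus ?thesis using s0 s1 unfolding \<rho>_def by simp
  qed
qed

lemma herm_qf_bound:
  assumes X: "X \<in> carrier_mat d d" and h: "herm d X" and d: "d > 0"
  shows "cmod (qf d X a a) \<le> spectral_radius X * nsq d a"
proof -
  have rho0: "spectral_radius X \<ge> 0" using spectral_radius_mem_max(1)[OF X d] by auto
  have "cmod (qf d X a a) \<le> sqrt (nsq d a) * sqrt (nsq d (mv d X a))" unfolding qf_mv by (rule cs_sum)
  also have "\<dots> \<le> sqrt (nsq d a) * sqrt ((spectral_radius X)\<^sup>2 * nsq d a)"
    by (intro mult_left_mono real_sqrt_le_mono herm_norm_bound[OF X h d]) (auto simp: nsq_nonneg)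
  also have "\<dots> = spectral_radius X * nsq d a" using rho0 nsq_nonneg[of d a]
    by (simp add: real_sqrt_mult)
  finally show ?thesis .
qed


lemma eig_entry: assumes X: "X \<in> carrier_mat d d" and ev: "eigenvector X v \<mu>" and i: "i < d"
  shows "mv d X (($) v) i = \<mu> * v$i"
proof -
  from ev X have v: "v \<in> carrier_vec d" and Xv: "X *\<^sub>v v = \<mu> \<cdot>\<^sub>v v" unfolding eigenvector_def by auto
  have "(X *\<^sub>v v) $ i = \<mu> * v $ i" using Xv i v by simp
  thus ?thesis using mv_vec[OF X v i] by simp
qed

lemma eig_nsq_pos: assumes X: "X \<in> carrier_mat d d" and ev: "eigenvector X v \<mu>"
  shows "nsq d (($) v) > 0"
proof (rule ccontr)
  from ev X have v: "v \<in> carrier_vec d" and v0: "v \<noteq> 0\<^sub>v d" unfolding eigenvector_def by auto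
  assume "\<not> ?thesis"
  hence "nsq d (($) v) = 0" using nsq_nonneg[of d "($) v"] by simp
  hence "v$i = 0" if "i < d" for i using nsq_zero that by auto
  hence "v = 0\<^sub>v d" using v by (intro eq_vecI) auto
  with v0 show False by simp
qed

lemma qf_herm_real: assumes h: "herm d X" shows "cnj (qf d X a a) = qf d X a a"
proof -
  have "cnj (qf d X a a) = (\<Sum>i<d. cnj (mv d X a i) * a i)" unfolding qf_mv
    by (simp add: mult.commute)
  also have "\<dots> = qf d X a a" unfolding qf_mv by (rule herm_swap[OF h])
  finally show ?thesis .
qed

lemma herm_eig_real: assumes X: "X \<in> carrier_mat d d" and h: "herm d X" and ev: "eigenvector X v \<mu>"
  shows "\<mu> = complex_of_real (Re \<mu>)"
proof -
  have q: "qf d X (($) v) (($) v) = \<mu> * complex_of_real (nsq d (($) v))"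
    unfolding qf_mv ip_nsq using eig_entry[OF X ev] by (simp add: sum_distrib_left mult_ac)
  have pos: "nsq d (($) v) > 0" by (rule eig_nsq_pos[OF X ev])
  from qf_herm_real[OF h, of "($) v"] q have "cnj \<mu> * complex_of_real (nsq d (($) v)) = \<mu> * complex_of_real (nsq d (($) v))"
    by simp
  hence "cnj \<mu> = \<mu>" using pos by simp
  hence "Im (cnj \<mu>) = Im \<mu>" by simp
  hence "Im \<mu> = 0" by simp
  thus ?thesis by (simp add: complex_eq_iff)
qed

definition shiftm :: "nat \<Rightarrow> real \<Rightarrow> real \<Rightarrow> complex mat \<Rightarrow> complex mat" where
  "shiftm d \<sigma> s X = mat d d (\<lambda>(i,j). complex_of_real \<sigma> * X$$(i,j) + (if i = j then complex_of_real s else 0))"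

lemma shiftm_carrier: "shiftm d \<sigma> s X \<in> carrier_mat d d" unfolding shiftm_def by auto

lemma shiftm_herm: assumes h: "herm d X" shows "herm d (shiftm d \<sigma> s X)"
  unfolding herm_def
proof (intro allI impI)
  fix i j assume ij: "i < d" "j < d"
  have e: "X$$(i,j) = cnj (X$$(j,i))" using h ij unfolding herm_def by blast
  show "shiftm d \<sigma> s X $$ (i, j) = cnj (shiftm d \<sigma> s X $$ (j, i))"
    unfolding shiftm_def using ij by (simp add: e)
qed

lemma mv_shiftm: "i < d \<Longrightarrow> mv d (shiftm d \<sigma> s X) u i = complex_of_real \<sigma> * mv d X u i + complex_of_real s * u i"
proof -
  assume i: "i < d"
  have "mv d (shiftm d \<sigma> s X) u i = (\<Sum>j<d. complex_of_real \<sigma> * X$$(i,j) * u j + (if j = i then complex_of_real s * u j else 0))"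
    unfolding mv_def shiftm_def using i by (intro sum.cong refl) (auto simp: distrib_right)
  also have "\<dots> = complex_of_real \<sigma> * mv d X u i + complex_of_real s * u i"
    unfolding mv_def using i by (simp add: sum.distrib sum_distrib_left mult.assoc)
  finally show ?thesis .
qed

lemma qf_shiftm: "qf d (shiftm d \<sigma> s X) a a = complex_of_real \<sigma> * qf d X a a + complex_of_real (s * nsq d a)"
proof -
  have "qf d (shiftm d \<sigma> s X) a a = (\<Sum>i<d. complex_of_real \<sigma> * (cnj (a i) * mv d X a i) + complex_of_real s * (cnj (a i) * a i))"
    unfolding qf_mv by (intro sum.cong refl) (simp add: mv_shiftm algebra_simps)
  also have "\<dots> = complex_of_real \<sigma> * qf d X a a + complex_of_real s * complex_of_real (nsq d a)"
    unfolding qf_mv ip_nsq by (simp add: sum.distrib sum_distrib_left)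
  finally show ?thesis by simp
qed

lemma spec_facts: assumes X: "X \<in> carrier_mat d d" and h: "herm d X" and \<mu>: "\<mu> \<in> spectrum X"
  shows "\<mu> = complex_of_real (Re \<mu>)" "spectral_min_re X \<le> Re \<mu>" "Re \<mu> \<le> spectral_abscissa X"
proof -
  from \<mu> obtain v where ev: "eigenvector X v \<mu>" unfolding spectrum_def eigenvalue_def by auto
  show "\<mu> = complex_of_real (Re \<mu>)" by (rule herm_eig_real[OF X h ev])
  have fin: "finite (Re ` spectrum X)" using card_finite_spectrum(1)[OF X] by auto
  show "spectral_min_re X \<le> Re \<mu>" unfolding spectral_min_re_def using fin \<mu> by (intro Min_le) auto
  show "Re \<mu> \<le> spectral_abscissa X" unfolding spectral_abscissa_def using fin \<mu> by (intro Max_ge) auto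
qed

lemma shift_bound: assumes X: "X \<in> carrier_mat d d" and h: "herm d X" and d: "d > 0"
  and sig: "\<sigma> = 1 \<or> \<sigma> = -1"
  and B: "\<And>\<mu>. \<mu> \<in> spectrum X \<Longrightarrow> 0 \<le> \<sigma> * Re \<mu> + s \<and> \<sigma> * Re \<mu> + s \<le> B"
  shows "cmod (qf d (shiftm d \<sigma> s X) a a) \<le> B * nsq d a"
proof -
  let ?Y = "shiftm d \<sigma> s X"
  have Y: "?Y \<in> carrier_mat d d" by (rule shiftm_carrier)
  have hY: "herm d ?Y" by (rule shiftm_herm[OF h])
  have "spectral_radius ?Y \<le> B"
  proof -
    from spectral_radius_mem_max(1)[OF Y d] obtain \<nu> where nu: "\<nu> \<in> spectrum ?Y"
      and eq: "spectral_radius ?Y = cmod \<nu>" by auto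
    from nu obtain w where ev: "eigenvector ?Y w \<nu>" unfolding spectrum_def eigenvalue_def by auto
    from ev Y have w: "w \<in> carrier_vec d" "w \<noteq> 0\<^sub>v d" unfolding eigenvector_def by auto
    define \<mu> where "\<mu> = (\<nu> - complex_of_real s) / complex_of_real \<sigma>"
    have s0: "complex_of_real \<sigma> \<noteq> 0" using sig by auto
    have "X *\<^sub>v w = \<mu> \<cdot>\<^sub>v w"
    proof (intro eq_vecI)
      fix i assume "i < dim_vec (\<mu> \<cdot>\<^sub>v w)" hence i: "i < d" using w by auto
      have "mv d ?Y (($) w) i = \<nu> * w$i" by (rule eig_entry[OF Y ev i])
      hence "complex_of_real \<sigma> * mv d X (($) w) i = (\<nu> - complex_of_real s) * w$i"
        unfolding mv_shiftm[OF i] by (simp add: algebra_simps)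
      hence "mv d X (($) w) i = \<mu> * w$i" unfolding \<mu>_def using s0 by (simp add: field_simps)
      thus "(X *\<^sub>v w) $ i = (\<mu> \<cdot>\<^sub>v w) $ i" using mv_vec[OF X w(1) i] i w by simp
    qed (use X w in auto)
    hence "eigenvector X w \<mu>" using w X unfolding eigenvector_def by auto
    hence mu: "\<mu> \<in> spectrum X" unfolding spectrum_def eigenvalue_def by auto
    from spec_facts(1)[OF X h mu] have mr: "\<mu> = complex_of_real (Re \<mu>)" .
    have "\<nu> = complex_of_real \<sigma> * \<mu> + complex_of_real s" unfolding \<mu>_def using s0 by (simp add: field_simps)
    also have "\<dots> = complex_of_real \<sigma> * complex_of_real (Re \<mu>) + complex_of_real s" using mr by simp
    also have "\<dots> = complex_of_real (\<sigma> * Re \<mu> + s)" by simp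
    finally have nu_eq: "\<nu> = complex_of_real (\<sigma> * Re \<mu> + s)" .
    have "cmod \<nu> = \<bar>\<sigma> * Re \<mu> + s\<bar>" unfolding nu_eq by (rule norm_of_real)
    with B[OF mu] have "cmod \<nu> \<le> B" by simp
    thus ?thesis using eq by simp
  qed
  moreover have "spectral_radius ?Y \<ge> 0" using spectral_radius_mem_max(1)[OF Y d] by auto
  ultimately show ?thesis using herm_qf_bound[OF Y hY d, of a] nsq_nonneg[of d a]
    by (meson mult_right_mono order_trans)
qed

lemma herm_rayleigh: assumes X: "X \<in> carrier_mat d d" and h: "herm d X" and d: "d > 0"
  shows "spectral_min_re X * nsq d a \<le> Re (qf d X a a)" "Re (qf d X a a) \<le> spectral_abscissa X * nsq d a"
proof -
  let ?l = "spectral_min_re X" and ?u = "spectral_abscissa X"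
  have "cmod (qf d (shiftm d 1 (- ?l) X) a a) \<le> (?u - ?l) * nsq d a"
    by (rule shift_bound[OF X h d]) (use spec_facts[OF X h] in auto)
  hence "Re (qf d (shiftm d 1 (- ?l) X) a a) \<le> (?u - ?l) * nsq d a"
    using complex_Re_le_cmod order_trans by blast
  thus "Re (qf d X a a) \<le> ?u * nsq d a" unfolding qf_shiftm by (simp add: algebra_simps)
  have "cmod (qf d (shiftm d (-1) ?u X) a a) \<le> (?u - ?l) * nsq d a"
    by (rule shift_bound[OF X h d]) (use spec_facts[OF X h] in auto)
  hence "Re (qf d (shiftm d (-1) ?u X) a a) \<le> (?u - ?l) * nsq d a"
    using complex_Re_le_cmod order_trans by blast
  thus "?l * nsq d a \<le> Re (qf d X a a)" unfolding qf_shiftm by (simp add: algebra_simps)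
qed

lemma min_eig_exists: assumes X: "X \<in> carrier_mat d d" and h: "herm d X" and d: "d > 0"
  shows "\<exists>v. eigenvector X v (complex_of_real (spectral_min_re X))"
proof -
  have fin: "finite (Re ` spectrum X)" using card_finite_spectrum(1)[OF X] by auto
  have ne: "Re ` spectrum X \<noteq> {}" using spectrum_non_empty[OF X d] by auto
  have "spectral_min_re X \<in> Re ` spectrum X" unfolding spectral_min_re_def using fin ne by (rule Min_in)
  then obtain \<mu> where mu: "\<mu> \<in> spectrum X" and eq: "spectral_min_re X = Re \<mu>" by auto
  have "\<mu> = complex_of_real (spectral_min_re X)" using spec_facts(1)[OF X h mu] eq by simp
  thus ?thesis using mu unfolding spectrum_def eigenvalue_def by auto
qed


lemma adj_carrier: "A \<in> carrier_mat d d \<Longrightarrow> mat_adjoint A \<in> carrier_mat d d"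
  unfolding mat_adjoint_def by auto

lemma adj_entry: assumes "A \<in> carrier_mat d d" "i < d" "j < d"
  shows "mat_adjoint A $$ (i,j) = cnj (A$$(j,i))"
  using assms unfolding mat_adjoint_def by (simp add: mat_of_rows_index)

lemma sum_add_split: fixes m d :: nat shows "(\<Sum>r<m+d. f r) = (\<Sum>r<m. f r) + (\<Sum>q<d. f (m+q))"
  by (induct d) (auto simp: add.assoc)

lemma sum_split: fixes n d :: nat shows "(\<Sum>r<n*d. f r) = (\<Sum>p<n. \<Sum>q<d. f (p*d+q))"
proof (induct n)
  case (Suc n)
  have "(\<Sum>r<Suc n * d. f r) = (\<Sum>r<n*d + d. f r)" by (simp add: add.commute)
  also have "\<dots> = (\<Sum>r<n*d. f r) + (\<Sum>q<d. f (n*d+q))" by (rule sum_add_split)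
  finally show ?case using Suc by simp
qed simp

lemma divmod_pd: assumes "q < (d::nat)" shows "(p*d+q) div d = p" "(p*d+q) mod d = q"
  using assms by auto

lemma lt_pd: assumes "p < (d::nat)" "q < d" shows "p*d+q < d*d"
proof -
  have "p*d+q < p*d + d" using assms by simp
  also have "\<dots> = (p+1)*d" by simp
  also have "\<dots> \<le> d*d" using assms by (intro mult_le_mono1) simp
  finally show ?thesis .
qed

definition unvecf :: "nat \<Rightarrow> (nat \<Rightarrow> complex) \<Rightarrow> complex mat" where
  "unvecf d z = mat d d (\<lambda>(p,q). z (p*d+q))"

lemma kron_entry: assumes "X \<in> carrier_mat d d" "Y \<in> carrier_mat d d" "r < d*d" "c < d*d"
  shows "kron X Y $$ (r,c) = X $$ (r div d, c div d) * Y $$ (r mod d, c mod d)"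
  using assms unfolding kron_def by simp

lemma kron_carrier: assumes "X \<in> carrier_mat d d" "Y \<in> carrier_mat d d"
  shows "kron X Y \<in> carrier_mat (d*d) (d*d)"
  using assms unfolding kron_def by auto

lemma conj_carrier: "X \<in> carrier_mat d d \<Longrightarrow> mat_conj X \<in> carrier_mat d d"
  unfolding mat_conj_def by auto

lemma conj_entry: "X \<in> carrier_mat d d \<Longrightarrow> i < d \<Longrightarrow> j < d \<Longrightarrow> mat_conj X $$ (i,j) = cnj (X $$ (i,j))"
  unfolding mat_conj_def by auto

lemma msum_carrier: "msum n f K \<in> carrier_mat n n" unfolding msum_def by auto

lemma msum_entry: "i < n \<Longrightarrow> j < n \<Longrightarrow> msum n f K $$ (i,j) = (\<Sum>k\<in>K. f k $$ (i,j))"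
  unfolding msum_def by auto

lemma div_lt: assumes "r < d*(d::nat)" shows "r div d < d" "r mod d < d"
  using assms by (auto simp: less_mult_imp_div_less mult.commute) (metis mod_less_divisor mult_0_right not_gr0 not_less0)


lemma msum_dim[simp]: "dim_row (msum n f K) = n" "dim_col (msum n f K) = n"
  unfolding msum_def by auto

lemma Lst_one: assumes "i < d" "j < d"
  shows "Lst d F S (1\<^sub>m d) i j = (\<Sum>k\<in>S. \<Sum>p<d. cnj (F k $$ (p,i)) * F k $$ (p,j))"
  unfolding Lst_def
proof (intro sum.cong refl)
  fix k p assume p: "p \<in> {..<d}"
  have "(\<Sum>q<d. cnj (F k $$ (p, i)) * 1\<^sub>m d $$ (p, q) * F k $$ (q, j)) = (\<Sum>q<d. if q = p then cnj (F k $$ (p, i)) * F k $$ (q, j) else 0)"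
    using p by (intro sum.cong refl) auto
  also have "\<dots> = cnj (F k $$ (p, i)) * F k $$ (p, j)" using p by simp
  finally show "(\<Sum>q<d. cnj (F k $$ (p, i)) * 1\<^sub>m d $$ (p, q) * F k $$ (q, j)) = cnj (F k $$ (p, i)) * F k $$ (p, j)" .
qed

lemma adjmult_entry: assumes "K \<in> carrier_mat d d" "i < d" "j < d"
  shows "(mat_adjoint K * K) $$ (i,j) = (\<Sum>p<d. cnj (K $$ (p,i)) * K $$ (p,j))"
  using assms by (simp add: mult_entry[OF adj_carrier] adj_entry)

lemma sum_0m: "(\<Sum>k\<in>{0..m::nat}. f k) = f 0 + (\<Sum>k\<in>{1..m}. f k)"
  by (simp add: sum.atLeast_Suc_atMost)

lemma kron_conj_entry: assumes "X \<in> carrier_mat d d" "r < d*d" "c < d*d"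
  shows "kron (mat_conj X) X $$ (r,c) = cnj (X $$ (r div d, c div d)) * X $$ (r mod d, c mod d)"
  using assms by (simp add: kron_entry[OF conj_carrier[OF assms(1)] assms(1)] conj_entry div_lt)

locale kr =
  fixes A :: "complex mat" and B :: "nat \<Rightarrow> complex mat" and d m :: nat
  assumes A: "A \<in> carrier_mat d d" and B: "\<And>k. k \<in> {1..m} \<Longrightarrow> B k \<in> carrier_mat d d"
begin

definition "FF = (\<lambda>k. if k = 0 then A else B k)"
definition "NN = mat_adjoint A * A + msum d (\<lambda>k. mat_adjoint (B k) * B k) {1..m}"
definition "DD = kron (mat_conj A) A + msum (d*d) (\<lambda>k. kron (mat_conj (B k)) (B k)) {1..m}"

lemma FF: "k \<in> {0..m} \<Longrightarrow> FF k \<in> carrier_mat d d"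
  unfolding FF_def using A B by auto

lemma N_entry: assumes "i < d" "j < d"
  shows "NN $$ (i,j)
    = (\<Sum>k\<in>{0..m}. \<Sum>p<d. cnj (FF k $$ (p,i)) * FF k $$ (p,j))"
proof -
  have "NN $$ (i,j)
     = (mat_adjoint A * A) $$ (i,j) + (\<Sum>k\<in>{1..m}. (mat_adjoint (B k) * B k) $$ (i,j))"
    unfolding NN_def using assms by (simp add: msum_entry)
  also have "\<dots> = (\<Sum>p<d. cnj (FF 0 $$ (p,i)) * FF 0 $$ (p,j)) + (\<Sum>k\<in>{1..m}. \<Sum>p<d. cnj (FF k $$ (p,i)) * FF k $$ (p,j))"
    using assms A B by (intro arg_cong2[where f = "(+)"] sum.cong refl) (auto simp: adjmult_entry FF_def)
  finally show ?thesis by (simp add: sum_0m)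
qed

lemma N_carrier: "NN \<in> carrier_mat d d"
  unfolding NN_def using A by (auto intro!: add_carrier_mat mult_carrier_mat adj_carrier msum_carrier)

lemma N_herm: "herm d NN"
  unfolding herm_def
proof (intro allI impI)
  fix i j assume ij: "i < d" "j < d"
  show "NN $$ (i,j) = cnj (NN $$ (j,i))" unfolding N_entry[OF ij] N_entry[OF ij(2,1)]
    by (simp add: mult.commute)
qed

lemma N_qf: "qf d NN a a
   = complex_of_real (\<Sum>k\<in>{0..m}. nsq d (mv d (FF k) a))"
proof -
  have "complex_of_real (\<Sum>k\<in>{0..m}. nsq d (mv d (FF k) a)) = (\<Sum>k\<in>{0..m}. qf d (1\<^sub>m d) (mv d (FF k) a) (mv d (FF k) a))"
    by (simp add: qf_one_nsq)
  also have "\<dots> = (\<Sum>i<d. \<Sum>j<d. cnj (a i) * Lst d FF {0..m} (1\<^sub>m d) i j * a j)" by (rule qf_Lst)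
  also have "\<dots> = qf d NN a a"
    unfolding qf_def by (intro sum.cong refl) (simp add: Lst_one N_entry)
  finally show ?thesis by simp
qed

lemma D_entry: assumes "r < d*d" "c < d*d"
  shows "DD $$ (r,c)
    = (\<Sum>k\<in>{0..m}. cnj (FF k $$ (r div d, c div d)) * FF k $$ (r mod d, c mod d))"
proof -
  have dv: "r div d < d" "c div d < d" "r mod d < d" "c mod d < d" using div_lt assms by auto
  have "DD $$ (r,c)
     = kron (mat_conj A) A $$ (r,c) + (\<Sum>k\<in>{1..m}. kron (mat_conj (B k)) (B k) $$ (r,c))"
    unfolding DD_def using assms by (simp add: msum_entry)
  also have "\<dots> = cnj (FF 0 $$ (r div d, c div d)) * FF 0 $$ (r mod d, c mod d)
     + (\<Sum>k\<in>{1..m}. cnj (FF k $$ (r div d, c div d)) * FF k $$ (r mod d, c mod d))"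
    using assms A B dv by (intro arg_cong2[where f = "(+)"] sum.cong refl)
      (auto simp: kron_conj_entry FF_def)
  finally show ?thesis by (simp add: sum_0m)
qed

lemma D_carrier: "DD \<in> carrier_mat (d*d) (d*d)"
  unfolding DD_def using A by (auto intro!: add_carrier_mat kron_carrier conj_carrier msum_carrier)

lemma DT_mv: assumes ij: "i < d" "j < d"
  shows "mv (d*d) (transpose_mat DD) z (i*d+j)
     = Lst d FF {0..m} (unvecf d z) i j"
proof -
  let ?D = "DD"
  have r: "i*d+j < d*d" by (rule lt_pd[OF ij])
  have "mv (d*d) (transpose_mat ?D) z (i*d+j) = (\<Sum>c<d*d. ?D $$ (c, i*d+j) * z c)"
    unfolding mv_def using D_carrier r by (intro sum.cong refl) auto
  also have "\<dots> = (\<Sum>p<d. \<Sum>q<d. ?D $$ (p*d+q, i*d+j) * z (p*d+q))" by (rule sum_split)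
  also have "\<dots> = (\<Sum>p<d. \<Sum>q<d. \<Sum>k\<in>{0..m}. cnj (FF k $$ (p,i)) * z (p*d+q) * FF k $$ (q,j))"
  proof (intro sum.cong refl)
    fix p q assume pq: "p \<in> {..<d}" "q \<in> {..<d}"
    define zz where "zz = z (p*d+q)"
    have De: "DD $$ (p*d+q, i*d+j) = (\<Sum>k\<in>{0..m}. cnj (FF k $$ (p,i)) * FF k $$ (q,j))"
      using pq ij by (simp add: D_entry lt_pd r divmod_pd)
    show "DD $$ (p*d+q, i*d+j) * z (p*d+q) = (\<Sum>k\<in>{0..m}. cnj (FF k $$ (p,i)) * z (p*d+q) * FF k $$ (q,j))"
      unfolding De zz_def[symmetric] by (simp add: sum_distrib_right sum_distrib_left mult_ac)
  qed
  also have "\<dots> = (\<Sum>k\<in>{0..m}. \<Sum>p<d. \<Sum>q<d. cnj (FF k $$ (p,i)) * z (p*d+q) * FF k $$ (q,j))"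
    by (rule swap3[symmetric])
  also have "\<dots> = Lst d FF {0..m} (unvecf d z) i j"
    unfolding Lst_def unvecf_def by (intro sum.cong refl) auto
  finally show ?thesis .
qed

end


lemma spectrum_transpose: fixes X :: "complex mat" assumes "X \<in> carrier_mat n n"
  shows "spectrum (transpose_mat X) = spectrum X"
proof -
  have T: "transpose_mat X \<in> carrier_mat n n" using assms by auto
  show ?thesis unfolding spectrum_root_char_poly[OF T] spectrum_root_char_poly[OF assms]
    using char_poly_transpose_mat[OF assms] by simp
qed

lemma sr_transpose: fixes X :: "complex mat" assumes "X \<in> carrier_mat n n"
  shows "spectral_radius (transpose_mat X) = spectral_radius X"
  unfolding spectral_radius_def spectrum_transpose[OF assms] ..

lemma qf_cong: "(\<And>i j. i < d \<Longrightarrow> j < d \<Longrightarrow> X $$ (i,j) = Y $$ (i,j)) \<Longrightarrow> qf d X a b = qf d Y a b"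
  unfolding qf_def by (intro sum.cong refl) auto

lemma unvecf_entry: "i < d \<Longrightarrow> j < d \<Longrightarrow> unvecf d z $$ (i,j) = z (i*d+j)"
  unfolding unvecf_def by simp

lemma unvecf_nonzero: assumes x: "x \<in> carrier_vec (d*d)" "x \<noteq> 0\<^sub>v (d*d)"
  shows "\<exists>i j. i < d \<and> j < d \<and> unvecf d (($) x) $$ (i,j) \<noteq> 0"
proof -
  have "\<exists>r<d*d. x $ r \<noteq> 0"
  proof (rule ccontr)
    assume "\<not> ?thesis"
    hence "x = 0\<^sub>v (d*d)" using x(1) by (intro eq_vecI) auto
    with x(2) show False by simp
  qed
  then obtain r where r: "r < d*d" "x $ r \<noteq> 0" by auto
  have eq: "r = (r div d) * d + r mod d" by simp
  show ?thesis using r div_lt[OF r(1)] unvecf_entry[of "r div d" d "r mod d"] eq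
    by (metis)
qed

lemma arch_contra: assumes "\<And>k::nat. l^k \<le> c * r^k" "0 < r" "r < (l::real)"
  shows False
proof -
  have q: "l / r > 1" using assms by simp
  from real_arch_pow[OF q, of c] obtain k where k: "c < (l/r)^k" by auto
  have "(l/r)^k = l^k / r^k" by (simp add: power_divide)
  also have "\<dots> \<le> c" using assms(1)[of k] assms(2) by (simp add: divide_le_eq)
  finally show False using k by simp
qed

context kr begin

lemma FF_bound: assumes d: "d > 0"
  shows "(\<Sum>k\<in>{0..m}. nsq d (mv d (FF k) a)) \<le> spectral_abscissa NN * nsq d a"
    "spectral_min_re NN * nsq d a \<le> (\<Sum>k\<in>{0..m}. nsq d (mv d (FF k) a))"
  using herm_rayleigh[OF N_carrier N_herm d, of a] unfolding N_qf by auto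

lemma sa_N_nonneg: assumes d: "d > 0" shows "spectral_abscissa NN \<ge> 0"
proof -
  have "0 \<le> (\<Sum>k\<in>{0..m}. nsq d (mv d (FF k) (ev 0)))" by (intro sum_nonneg nsq_nonneg)
  also have "\<dots> \<le> spectral_abscissa NN * nsq d (ev 0)" by (rule FF_bound(1)[OF d])
  finally show ?thesis using nsq_ev[OF d] by simp
qed

lemma DT_carrier: "transpose_mat DD \<in> carrier_mat (d*d) (d*d)" using D_carrier by auto

lemma D_upper: assumes d: "d > 0" shows "spectral_radius DD \<le> spectral_abscissa NN"
proof -
  let ?\<beta> = "spectral_abscissa NN"
  let ?T = "transpose_mat DD"
  have dd: "d*d > 0" using d by simp
  have b0: "?\<beta> \<ge> 0" by (rule sa_N_nonneg[OF d])
  have main: "cmod \<mu> \<le> ?\<beta>" if mu: "\<mu> \<in> spectrum DD" for \<mu>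
  proof (rule ccontr)
    assume "\<not> ?thesis" hence gt: "cmod \<mu> > ?\<beta>" by simp
    from mu have "\<mu> \<in> spectrum ?T" using spectrum_transpose[OF D_carrier] by simp
    then obtain x where ev: "eigenvector ?T x \<mu>" unfolding spectrum_def eigenvalue_def by auto
    from ev DT_carrier have x: "x \<in> carrier_vec (d*d)" "x \<noteq> 0\<^sub>v (d*d)" unfolding eigenvector_def by auto
    define Y where "Y = unvecf d (($) x)"
    have LY: "Lst d FF {0..m} Y i j = \<mu> * Y $$ (i,j)" if ij: "i < d" "j < d" for i j
    proof -
      have r: "i*d+j < d*d" by (rule lt_pd[OF ij])
      have "Lst d FF {0..m} Y i j = mv (d*d) ?T (($) x) (i*d+j)" unfolding Y_def DD_def
        using DT_mv[OF ij] DD_def by simp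
      also have "\<dots> = \<mu> * x $ (i*d+j)" by (rule eig_entry[OF DT_carrier ev r])
      finally show ?thesis unfolding Y_def using ij by (simp add: unvecf_entry)
    qed
    have qfeq: "(\<Sum>k\<in>{0..m}. qf d Y (mv d (FF k) a) (mv d (FF k) b)) = \<mu> * qf d Y a b" for a b
    proof -
      have "(\<Sum>k\<in>{0..m}. qf d Y (mv d (FF k) a) (mv d (FF k) b)) = (\<Sum>i<d. \<Sum>j<d. cnj(a i) * Lst d FF {0..m} Y i j * b j)"
        by (rule qf_Lst)
      also have "\<dots> = (\<Sum>i<d. \<Sum>j<d. \<mu> * (cnj (a i) * Y$$(i,j) * b j))" by (intro sum.cong refl) (simp add: LY)
      also have "\<dots> = \<mu> * qf d Y a b" unfolding qf_def by (simp add: sum_distrib_left)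
      finally show ?thesis .
    qed
    have mpos: "cmod \<mu> > 0" using gt b0 by linarith
    define q where "q = ?\<beta> / cmod \<mu>"
    have q: "0 \<le> q" "q < 1" unfolding q_def using b0 gt mpos by auto
    have step: "bnd d Y (q * c)" if c: "c \<ge> 0" "bnd d Y c" for c
      unfolding bnd_def
    proof (intro allI)
      fix a b
      have "cmod \<mu> * cmod (qf d Y a b) \<le> c * ?\<beta> * sqrt (nsq d a) * sqrt (nsq d b)"
        using kraus_bound[OF _ FF_bound(1)[OF d] b0 c(2) c(1), of a b] unfolding qfeq by (simp add: norm_mult)
      hence "cmod (qf d Y a b) \<le> (c * ?\<beta> * sqrt (nsq d a) * sqrt (nsq d b)) / cmod \<mu>"
        using mpos by (simp add: le_divide_eq mult.commute)
      thus "cmod (qf d Y a b) \<le> q * c * sqrt (nsq d a) * sqrt (nsq d b)" unfolding q_def by (simp add: field_simps)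
    qed
    from unvecf_nonzero[OF x] obtain i j where ij: "i < d" "j < d" "Y $$ (i,j) \<noteq> 0" unfolding Y_def by auto
    have "Y $$ (i,j) = 0" by (rule decay[OF bnd_init bnd_nonneg_init step q ij(1,2)])
    with ij(3) show False by simp
  qed
  from spectral_radius_mem_max(1)[OF D_carrier dd] main show ?thesis by auto
qed


lemma mv_one: assumes "r < n" shows "mv n (1\<^sub>m n) z r = z r"
proof -
  have "mv n (1\<^sub>m n) z r = (\<Sum>c<n. if c = r then z c else 0)" unfolding mv_def using assms
    by (intro sum.cong refl) auto
  thus ?thesis using assms by simp
qed

lemma D_lower: assumes d: "d > 0" shows "spectral_min_re NN \<le> spectral_radius DD"
proof (rule ccontr)
  let ?l = "spectral_min_re NN"
  let ?T = "transpose_mat DD"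
  let ?\<rho> = "spectral_radius DD"
  assume "\<not> ?thesis" hence lt: "?\<rho> < ?l" by simp
  have dd: "d*d > 0" using d by simp
  have rho0: "?\<rho> \<ge> 0" using spectral_radius_mem_max(1)[OF D_carrier dd] by auto
  define r where "r = (?\<rho> + ?l) / 2"
  have r: "?\<rho> < r" "r < ?l" "r > 0" unfolding r_def using lt rho0 by auto
  have srT: "spectral_radius ?T < r" using sr_transpose[OF D_carrier] r by simp
  define x0 where "x0 = (\<lambda>r. if r div d = r mod d then 1 else 0 :: complex)"
  from growth_vec[OF DT_carrier srT r(3), of x0] obtain c where
    c: "\<And>k i. i < d*d \<Longrightarrow> cmod (mv (d*d) (?T ^\<^sub>m k) x0 i) \<le> c * r^k" by blast
  define z where "z k = mv (d*d) (?T ^\<^sub>m k) x0" for k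
  define Y where "Y k = unvecf d (z k)" for k
  have zS: "z (Suc k) i = mv (d*d) ?T (z k) i" if "i < d*d" for k i
    unfolding z_def pow_Suc'[OF DT_carrier] using mv_mult[OF DT_carrier _ that] DT_carrier by auto
  have YS: "Y (Suc k) $$ (i,j) = Lst d FF {0..m} (Y k) i j" if ij: "i < d" "j < d" for k i j
  proof -
    have "Y (Suc k) $$ (i,j) = z (Suc k) (i*d+j)" unfolding Y_def using ij by (simp add: unvecf_entry)
    also have "\<dots> = mv (d*d) ?T (z k) (i*d+j)" by (rule zS[OF lt_pd[OF ij]])
    also have "\<dots> = Lst d FF {0..m} (Y k) i j" unfolding Y_def using DT_mv[OF ij] DD_def by simp
    finally show ?thesis .
  qed
  have Y0: "Y 0 $$ (i,j) = 1\<^sub>m d $$ (i,j)" if ij: "i < d" "j < d" for i j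
  proof -
    have "Y 0 $$ (i,j) = z 0 (i*d+j)" unfolding Y_def using ij by (simp add: unvecf_entry)
    also have "\<dots> = x0 (i*d+j)" unfolding z_def using DT_carrier lt_pd[OF ij] by (simp add: mv_one)
    also have "\<dots> = 1\<^sub>m d $$ (i,j)" unfolding x0_def using ij by (simp add: divmod_pd)
    finally show ?thesis .
  qed
  have low: "Re (qf d (Y k) a a) \<ge> ?l^k * nsq d a" for k a
  proof (induct k arbitrary: a)
    case 0
    have "qf d (Y 0) a a = qf d (1\<^sub>m d) a a" by (rule qf_cong, rule Y0)
    thus ?case by (simp add: qf_one_nsq)
  next
    case (Suc k)
    have "qf d (Y (Suc k)) a a = (\<Sum>i<d. \<Sum>j<d. cnj (a i) * Lst d FF {0..m} (Y k) i j * a j)"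
      unfolding qf_def by (intro sum.cong refl) (simp add: YS)
    also have "\<dots> = (\<Sum>k'\<in>{0..m}. qf d (Y k) (mv d (FF k') a) (mv d (FF k') a))" by (rule qf_Lst[symmetric])
    finally have "Re (qf d (Y (Suc k)) a a) = (\<Sum>k'\<in>{0..m}. Re (qf d (Y k) (mv d (FF k') a) (mv d (FF k') a)))"
      by simp
    also have "\<dots> \<ge> (\<Sum>k'\<in>{0..m}. ?l^k * nsq d (mv d (FF k') a))"
      by (intro sum_mono Suc)
    finally have "Re (qf d (Y (Suc k)) a a) \<ge> ?l^k * (\<Sum>k'\<in>{0..m}. nsq d (mv d (FF k') a))"
      by (simp add: sum_distrib_left)
    moreover have "?l^k * (\<Sum>k'\<in>{0..m}. nsq d (mv d (FF k') a)) \<ge> ?l^k * (?l * nsq d a)"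
      using FF_bound(2)[OF d, of a] r by (intro mult_left_mono) auto
    ultimately have "?l^k * (?l * nsq d a) \<le> Re (qf d (Y (Suc k)) a a)" by linarith
    thus ?case by (simp add: mult_ac)
  qed
  have "?l^k \<le> c * r^k" for k
  proof -
    have "?l^k = ?l^k * nsq d (ev 0)" using nsq_ev[OF d] by simp
    also have "\<dots> \<le> Re (qf d (Y k) (ev 0) (ev 0))" by (rule low)
    also have "\<dots> \<le> cmod (Y k $$ (0,0))" using qf_ev[OF d d] complex_Re_le_cmod by simp
    also have "Y k $$ (0,0) = z k 0" unfolding Y_def using d by (simp add: unvecf_entry)
    also have "cmod (z k 0) \<le> c * r^k" unfolding z_def using c dd by auto
    finally show ?thesis .
  qed
  from arch_contra[OF this r(3) r(2)] show False .
qed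
end


lemma kron_one_r: assumes "X \<in> carrier_mat d d" "r < d*d" "c < d*d"
  shows "kron (mat_conj X) (1\<^sub>m d) $$ (r,c) = cnj (X $$ (r div d, c div d)) * (if r mod d = c mod d then 1 else 0)"
  using assms by (simp add: kron_entry[OF conj_carrier[OF assms(1)]] conj_entry div_lt)

lemma kron_one_l: assumes "X \<in> carrier_mat d d" "r < d*d" "c < d*d"
  shows "kron (1\<^sub>m d) X $$ (r,c) = (if r div d = c div d then 1 else 0) * X $$ (r mod d, c mod d)"
  using assms by (simp add: kron_entry[OF one_carrier_mat assms(1)] div_lt)

lemma kron_dim[simp]: "dim_row (kron X Y) = dim_row X * dim_row Y" "dim_col (kron X Y) = dim_col X * dim_col Y"
  unfolding kron_def by auto

lemma conj_dim[simp]: "dim_row (mat_conj X) = dim_row X" "dim_col (mat_conj X) = dim_col X"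
  unfolding mat_conj_def by auto

lemma adj_dim: "X \<in> carrier_mat d d \<Longrightarrow> dim_row (mat_adjoint X) = d \<and> dim_col (mat_adjoint X) = d"
  using adj_carrier by auto

context kr begin

definition "CC = kron (mat_conj A) (1\<^sub>m d) + kron (1\<^sub>m d) A + msum (d*d) (\<lambda>k. kron (mat_conj (B k)) (B k)) {1..m}"
definition "MM = A + mat_adjoint A + msum d (\<lambda>k. mat_adjoint (B k) * B k) {1..m}"
definition "Gent Y i j = (\<Sum>p<d. cnj (A$$(p,i)) * Y$$(p,j)) + (\<Sum>q<d. Y$$(i,q) * A$$(q,j)) + Lst d B {1..m} Y i j"

lemma C_carrier: "CC \<in> carrier_mat (d*d) (d*d)"
  unfolding CC_def using A by (auto intro!: add_carrier_mat kron_carrier conj_carrier msum_carrier)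

lemma CT_carrier: "transpose_mat CC \<in> carrier_mat (d*d) (d*d)" using C_carrier by auto

lemma M_carrier: "MM \<in> carrier_mat d d"
  unfolding MM_def using A by (auto intro!: add_carrier_mat mult_carrier_mat adj_carrier msum_carrier)

lemma C_entry: assumes "r < d*d" "c < d*d"
  shows "CC $$ (r,c) = cnj (A $$ (r div d, c div d)) * (if r mod d = c mod d then 1 else 0)
     + (if r div d = c div d then 1 else 0) * A $$ (r mod d, c mod d)
     + (\<Sum>k\<in>{1..m}. cnj (B k $$ (r div d, c div d)) * B k $$ (r mod d, c mod d))"
  unfolding CC_def using assms A B
  by (simp add: msum_entry kron_one_r kron_one_l kron_conj_entry kron_carrier conj_carrier, intro sum.cong refl)
    (auto simp: kron_conj_entry)

lemma M_entry: assumes "i < d" "j < d"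
  shows "MM $$ (i,j) = A $$ (i,j) + cnj (A $$ (j,i)) + (\<Sum>k\<in>{1..m}. \<Sum>p<d. cnj (B k $$ (p,i)) * B k $$ (p,j))"
  unfolding MM_def using assms A B adj_dim[OF A]
  by (simp add: msum_entry adj_carrier adj_entry, intro sum.cong refl) (auto simp: adjmult_entry)

lemma M_Gent: assumes "i < d" "j < d" shows "MM $$ (i,j) = Gent (1\<^sub>m d) i j"
proof -
  have g1: "(\<Sum>p<d. cnj (A$$(p,i)) * 1\<^sub>m d $$(p,j)) = cnj (A $$ (j,i))"
  proof -
    have "(\<Sum>p<d. cnj (A$$(p,i)) * 1\<^sub>m d $$(p,j)) = (\<Sum>p<d. if p = j then cnj (A$$(p,i)) else 0)"
      using assms by (intro sum.cong refl) auto
    thus ?thesis using assms by simp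
  qed
  have g2: "(\<Sum>q<d. 1\<^sub>m d $$(i,q) * A$$(q,j)) = A $$ (i,j)"
  proof -
    have "(\<Sum>q<d. 1\<^sub>m d $$(i,q) * A$$(q,j)) = (\<Sum>q<d. if q = i then A$$(q,j) else 0)"
      using assms by (intro sum.cong refl) auto
    thus ?thesis using assms by simp
  qed
  show ?thesis unfolding Gent_def g1 g2 M_entry[OF assms] Lst_one[OF assms] by simp
qed

lemma M_herm: "herm d MM"
  unfolding herm_def
proof (intro allI impI)
  fix i j assume ij: "i < d" "j < d"
  show "MM $$ (i,j) = cnj (MM $$ (j,i))" unfolding M_entry[OF ij] M_entry[OF ij(2,1)]
    by (simp add: mult.commute)
qed

lemma CT_mv: assumes ij: "i < d" "j < d"
  shows "mv (d*d) (transpose_mat CC) z (i*d+j) = Gent (unvecf d z) i j"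
proof -
  have r: "i*d+j < d*d" by (rule lt_pd[OF ij])
  let ?Y = "unvecf d z"
  have "mv (d*d) (transpose_mat CC) z (i*d+j) = (\<Sum>c<d*d. CC $$ (c, i*d+j) * z c)"
    unfolding mv_def using C_carrier r by (intro sum.cong refl) auto
  also have "\<dots> = (\<Sum>p<d. \<Sum>q<d. CC $$ (p*d+q, i*d+j) * z (p*d+q))" by (rule sum_split)
  also have "\<dots> = (\<Sum>p<d. \<Sum>q<d. (if q = j then cnj (A $$ (p,i)) * ?Y $$ (p,q) else 0))
     + (\<Sum>p<d. \<Sum>q<d. (if p = i then ?Y $$ (p,q) * A $$ (q,j) else 0))
     + (\<Sum>p<d. \<Sum>q<d. \<Sum>k\<in>{1..m}. cnj (B k $$ (p,i)) * ?Y $$ (p,q) * B k $$ (q,j))"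
    unfolding sum.distrib[symmetric]
  proof (intro sum.cong refl)
    fix p q assume pq: "p \<in> {..<d}" "q \<in> {..<d}"
    define zz where "zz = z (p*d+q)"
    have Y: "?Y $$ (p,q) = zz" unfolding zz_def using pq by (simp add: unvecf_entry)
    have Ce: "CC $$ (p*d+q, i*d+j) = cnj (A $$ (p, i)) * (if q = j then 1 else 0)
     + (if p = i then 1 else 0) * A $$ (q, j) + (\<Sum>k\<in>{1..m}. cnj (B k $$ (p, i)) * B k $$ (q, j))"
      using pq ij by (simp add: C_entry lt_pd r divmod_pd)
    show "CC $$ (p*d+q, i*d+j) * z (p*d+q) = (if q = j then cnj (A $$ (p,i)) * ?Y $$ (p,q) else 0)
     + (if p = i then ?Y $$ (p,q) * A $$ (q,j) else 0)
     + (\<Sum>k\<in>{1..m}. cnj (B k $$ (p,i)) * ?Y $$ (p,q) * B k $$ (q,j))"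
      unfolding Ce Y zz_def[symmetric] by (cases "p = i"; cases "q = j") (simp_all add: distrib_right sum_distrib_right distrib_left sum_distrib_left mult_ac)
  qed
  also have "\<dots> = Gent ?Y i j"
  proof -
    have "(\<Sum>p<d. \<Sum>q<d. (if q = j then cnj (A $$ (p,i)) * ?Y $$ (p,q) else 0)) = (\<Sum>p<d. cnj (A$$(p,i)) * ?Y$$(p,j))"
      using ij by simp
    moreover have "(\<Sum>p<d. \<Sum>q<d. (if p = i then ?Y $$ (p,q) * A $$ (q,j) else 0)) = (\<Sum>q<d. ?Y$$(i,q) * A$$(q,j))"
      using ij by (simp add: sum.swap[of _ "{..<d}" "{..<d}"])
    moreover have "(\<Sum>p<d. \<Sum>q<d. \<Sum>k\<in>{1..m}. cnj (B k $$ (p,i)) * ?Y $$ (p,q) * B k $$ (q,j)) = Lst d B {1..m} ?Y i j"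
      unfolding Lst_def by (rule swap3[symmetric])
    ultimately show ?thesis unfolding Gent_def by simp
  qed
  finally show ?thesis .
qed

lemma Gent_qf: "(\<Sum>i<d. \<Sum>j<d. cnj (a i) * Gent Y i j * b j)
   = qf d Y (mv d A a) b + qf d Y a (mv d A b) + (\<Sum>k\<in>{1..m}. qf d Y (mv d (B k) a) (mv d (B k) b))"
proof -
  have t1: "(\<Sum>i<d. \<Sum>j<d. cnj (a i) * (\<Sum>p<d. cnj (A$$(p,i)) * Y$$(p,j)) * b j) = qf d Y (mv d A a) b"
  proof -
    have "(\<Sum>i<d. \<Sum>j<d. cnj (a i) * (\<Sum>p<d. cnj (A$$(p,i)) * Y$$(p,j)) * b j)
       = (\<Sum>i<d. \<Sum>j<d. \<Sum>p<d. cnj (A$$(p,i)) * cnj (a i) * Y$$(p,j) * b j)"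
      by (simp add: sum_distrib_left sum_distrib_right mult_ac)
    also have "\<dots> = (\<Sum>p<d. \<Sum>j<d. \<Sum>i<d. cnj (A$$(p,i)) * cnj (a i) * Y$$(p,j) * b j)"
    proof -
      have "(\<Sum>i<d. \<Sum>j<d. \<Sum>p<d. cnj (A$$(p,i)) * cnj (a i) * Y$$(p,j) * b j)
          = (\<Sum>j<d. \<Sum>p<d. \<Sum>i<d. cnj (A$$(p,i)) * cnj (a i) * Y$$(p,j) * b j)" by (rule swap3)
      also have "\<dots> = (\<Sum>p<d. \<Sum>j<d. \<Sum>i<d. cnj (A$$(p,i)) * cnj (a i) * Y$$(p,j) * b j)" by (rule sum.swap)
      finally show ?thesis .
    qed
    also have "\<dots> = qf d Y (mv d A a) b" unfolding qf_def mv_def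
      by (simp add: sum_distrib_left sum_distrib_right mult_ac)
    finally show ?thesis .
  qed
  have t2: "(\<Sum>i<d. \<Sum>j<d. cnj (a i) * (\<Sum>q<d. Y$$(i,q) * A$$(q,j)) * b j) = qf d Y a (mv d A b)"
  proof -
    have "(\<Sum>i<d. \<Sum>j<d. cnj (a i) * (\<Sum>q<d. Y$$(i,q) * A$$(q,j)) * b j)
       = (\<Sum>i<d. \<Sum>j<d. \<Sum>q<d. cnj (a i) * Y$$(i,q) * (A$$(q,j) * b j))"
      by (simp add: sum_distrib_left sum_distrib_right mult_ac)
    also have "\<dots> = (\<Sum>i<d. \<Sum>q<d. \<Sum>j<d. cnj (a i) * Y$$(i,q) * (A$$(q,j) * b j))"
      by (rule sum.cong[OF refl], rule sum.swap)
    also have "\<dots> = qf d Y a (mv d A b)" unfolding qf_def mv_def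
      by (simp add: sum_distrib_left)
    finally show ?thesis .
  qed
  have "(\<Sum>i<d. \<Sum>j<d. cnj (a i) * Gent Y i j * b j)
     = (\<Sum>i<d. \<Sum>j<d. cnj (a i) * (\<Sum>p<d. cnj (A$$(p,i)) * Y$$(p,j)) * b j)
       + (\<Sum>i<d. \<Sum>j<d. cnj (a i) * (\<Sum>q<d. Y$$(i,q) * A$$(q,j)) * b j)
       + (\<Sum>i<d. \<Sum>j<d. cnj (a i) * Lst d B {1..m} Y i j * b j)"
    unfolding Gent_def sum.distrib[symmetric] by (intro sum.cong refl) (simp add: algebra_simps)
  also have "\<dots> = qf d Y (mv d A a) b + qf d Y a (mv d A b) + (\<Sum>k\<in>{1..m}. qf d Y (mv d (B k) a) (mv d (B k) b))"
    unfolding t1 t2 qf_Lst ..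
  finally show ?thesis .
qed

lemma M_qf: "qf d MM a b = qf d (1\<^sub>m d) (mv d A a) b + qf d (1\<^sub>m d) a (mv d A b) + (\<Sum>k\<in>{1..m}. qf d (1\<^sub>m d) (mv d (B k) a) (mv d (B k) b))"
proof -
  have "qf d MM a b = (\<Sum>i<d. \<Sum>j<d. cnj (a i) * Gent (1\<^sub>m d) i j * b j)"
    unfolding qf_def by (intro sum.cong refl) (simp add: M_Gent)
  also have "\<dots> = qf d (1\<^sub>m d) (mv d A a) b + qf d (1\<^sub>m d) a (mv d A b) + (\<Sum>k\<in>{1..m}. qf d (1\<^sub>m d) (mv d (B k) a) (mv d (B k) b))"
    by (rule Gent_qf)
  finally show ?thesis .
qed

end


lemma qf_cong_l: "(\<And>i. i < d \<Longrightarrow> u i = u' i) \<Longrightarrow> qf d Y u b = qf d Y u' b"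
  unfolding qf_def by (intro sum.cong refl) auto
lemma qf_cong_r: "(\<And>i. i < d \<Longrightarrow> u i = u' i) \<Longrightarrow> qf d Y a u = qf d Y a u'"
  unfolding qf_def by (intro sum.cong refl) auto

lemma qf_lin_l: "qf d Y (\<lambda>i. u i + complex_of_real t * w i) b = qf d Y u b + complex_of_real t * qf d Y w b"
  unfolding qf_def by (simp add: algebra_simps sum.distrib sum_distrib_left)

lemma qf_lin_r: "qf d Y a (\<lambda>i. u i + complex_of_real t * w i) = qf d Y a u + complex_of_real t * qf d Y a w"
  unfolding qf_def by (simp add: algebra_simps sum.distrib sum_distrib_left)

lemma qf_scale: "qf d Y (\<lambda>i. complex_of_real s * u i) (\<lambda>i. complex_of_real s * w i) = complex_of_real (s*s) * qf d Y u w"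
  unfolding qf_def by (simp add: algebra_simps sum_distrib_left)

lemma nsq_lin: "nsq d (\<lambda>i. u i + complex_of_real t * w i) = nsq d u + 2 * t * Re (\<Sum>i<d. cnj (u i) * w i) + t\<^sup>2 * nsq d w"
proof -
  define S where "S = (\<Sum>i<d. cnj (u i) * w i)"
  have "complex_of_real (nsq d (\<lambda>i. u i + complex_of_real t * w i))
     = (\<Sum>i<d. cnj (u i) * u i) + complex_of_real t * S + complex_of_real t * (\<Sum>i<d. cnj (w i) * u i)
       + complex_of_real (t\<^sup>2) * (\<Sum>i<d. cnj (w i) * w i)"
    unfolding ip_nsq S_def by (simp add: algebra_simps sum.distrib sum_distrib_left power2_eq_square)
  also have "(\<Sum>i<d. cnj (w i) * u i) = cnj S" unfolding S_def by (simp add: mult.commute)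
  finally have "complex_of_real (nsq d (\<lambda>i. u i + complex_of_real t * w i))
     = complex_of_real (nsq d u) + complex_of_real t * S + complex_of_real t * cnj S + complex_of_real (t\<^sup>2) * complex_of_real (nsq d w)"
    unfolding ip_nsq .
  hence "Re (complex_of_real (nsq d (\<lambda>i. u i + complex_of_real t * w i))) = nsq d u + t * Re S + t * Re S + t\<^sup>2 * nsq d w"
    by simp
  thus ?thesis unfolding S_def by simp
qed

lemma nsq_scale: "nsq d (\<lambda>i. complex_of_real s * u i) = s\<^sup>2 * nsq d u"
  unfolding nsq_def by (simp add: norm_mult power_mult_distrib sum_distrib_left)

lemma mv_bound: "nsq d (mv d A a) \<le> (\<Sum>i<d. \<Sum>j<d. (cmod (A$$(i,j)))\<^sup>2) * nsq d a"
proof -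
  have "(cmod (mv d A a i))\<^sup>2 \<le> (\<Sum>j<d. (cmod (A$$(i,j)))\<^sup>2) * nsq d a" for i
  proof -
    have "cmod (mv d A a i) = cmod (\<Sum>j<d. cnj (cnj (A$$(i,j))) * a j)" unfolding mv_def by simp
    also have "\<dots> \<le> sqrt (nsq d (\<lambda>j. cnj (A$$(i,j)))) * sqrt (nsq d a)" by (rule cs_sum)
    finally have "(cmod (mv d A a i))\<^sup>2 \<le> (sqrt (nsq d (\<lambda>j. cnj (A$$(i,j)))) * sqrt (nsq d a))\<^sup>2"
      by (intro power_mono) auto
    also have "\<dots> = nsq d (\<lambda>j. cnj (A$$(i,j))) * nsq d a"
      by (simp add: power_mult_distrib nsq_nonneg)
    also have "nsq d (\<lambda>j. cnj (A$$(i,j))) = (\<Sum>j<d. (cmod (A$$(i,j)))\<^sup>2)" unfolding nsq_def by simp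
    finally show ?thesis .
  qed
  hence "nsq d (mv d A a) \<le> (\<Sum>i<d. (\<Sum>j<d. (cmod (A$$(i,j)))\<^sup>2) * nsq d a)"
    unfolding nsq_def by (intro sum_mono) (simp add: nsq_def)
  thus ?thesis by (simp add: sum_distrib_right)
qed


context kr begin

lemma M_Re: "Re (qf d MM a a) = 2 * Re (\<Sum>i<d. cnj (a i) * mv d A a i) + (\<Sum>k\<in>{1..m}. nsq d (mv d (B k) a))"
proof -
  have "qf d (1\<^sub>m d) (mv d A a) a = cnj (\<Sum>i<d. cnj (a i) * mv d A a i)" unfolding qf_one by (simp add: mult.commute)
  moreover have "qf d (1\<^sub>m d) a (mv d A a) = (\<Sum>i<d. cnj (a i) * mv d A a i)" unfolding qf_one ..
  ultimately show ?thesis unfolding M_qf by (simp add: qf_one_nsq)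
qed

definition "GG t = (\<lambda>k. mat d d (\<lambda>(i,j). if k = 0 then (if i = j then 1 else 0) + complex_of_real t * A$$(i,j)
   else complex_of_real (sqrt t) * B k $$ (i,j)))"

lemma mv_G0: "i < d \<Longrightarrow> mv d (GG t 0) a i = a i + complex_of_real t * mv d A a i"
proof -
  assume i: "i < d"
  have "mv d (GG t 0) a i = (\<Sum>j<d. (if j = i then a j else 0) + complex_of_real t * (A$$(i,j) * a j))"
    unfolding mv_def GG_def using i by (intro sum.cong refl) (auto simp: algebra_simps)
  thus ?thesis using i unfolding mv_def by (simp add: sum.distrib sum_distrib_left)
qed

lemma mv_Gk: "i < d \<Longrightarrow> k \<noteq> 0 \<Longrightarrow> mv d (GG t k) a i = complex_of_real (sqrt t) * mv d (B k) a i"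
  unfolding mv_def GG_def by (simp add: sum_distrib_left mult.assoc)

lemma C_upper: assumes d: "d > 0" shows "spectral_abscissa CC \<le> spectral_abscissa MM"
proof -
  let ?\<beta> = "spectral_abscissa MM"
  let ?T = "transpose_mat CC"
  define KA where "KA = (\<Sum>i<d. \<Sum>j<d. (cmod (A$$(i,j)))\<^sup>2)"
  have KA0: "KA \<ge> 0" unfolding KA_def by (intro sum_nonneg) auto
  have dd: "d*d > 0" using d by simp
  have main: "Re \<mu> \<le> ?\<beta>" if mu: "\<mu> \<in> spectrum CC" for \<mu>
  proof (rule ccontr)
    assume "\<not> ?thesis" hence gt: "Re \<mu> > ?\<beta>" by simp
    define \<delta> where "\<delta> = Re \<mu> - ?\<beta>"
    have dpos: "\<delta> > 0" unfolding \<delta>_def using gt by simp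
    define t where "t = min (1 / (\<bar>?\<beta>\<bar> + 1)) (\<delta> / (4 * KA + 1))"
    have tpos: "t > 0" unfolding t_def using dpos KA0 by simp
    have t1: "t * \<bar>?\<beta>\<bar> < 1"
    proof -
      have "t \<le> 1 / (\<bar>?\<beta>\<bar> + 1)" unfolding t_def by simp
      hence "t * (\<bar>?\<beta>\<bar> + 1) \<le> 1" by (simp add: field_simps)
      thus ?thesis using tpos by (simp add: algebra_simps)
    qed
    have t2: "2 * t * KA < \<delta>"
    proof -
      have "t \<le> \<delta> / (4 * KA + 1)" unfolding t_def by simp
      hence "t * (4 * KA + 1) \<le> \<delta>" using KA0 by (simp add: field_simps)
      moreover have "t*KA \<ge> 0" using tpos KA0 by simp
      moreover have "t * (4 * KA + 1) = 4 * (t*KA) + t" by (simp add: algebra_simps)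
      ultimately show ?thesis using tpos by linarith
    qed
    have bt0: "1 + t * ?\<beta> > 0"
    proof -
      have "t * (- ?\<beta>) \<le> t * \<bar>?\<beta>\<bar>" using tpos by (intro mult_left_mono) auto
      thus ?thesis using t1 by simp
    qed
    from mu have "\<mu> \<in> spectrum ?T" using spectrum_transpose[OF C_carrier] by simp
    then obtain x where ev: "eigenvector ?T x \<mu>" unfolding spectrum_def eigenvalue_def by auto
    from ev CT_carrier have x: "x \<in> carrier_vec (d*d)" "x \<noteq> 0\<^sub>v (d*d)" unfolding eigenvector_def by auto
    define Y where "Y = unvecf d (($) x)"
    have GY: "Gent Y i j = \<mu> * Y $$ (i,j)" if ij: "i < d" "j < d" for i j
    proof -
      have r: "i*d+j < d*d" by (rule lt_pd[OF ij])
      have "Gent Y i j = mv (d*d) ?T (($) x) (i*d+j)" unfolding Y_def using CT_mv[OF ij] by simp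
      also have "\<dots> = \<mu> * x $ (i*d+j)" by (rule eig_entry[OF CT_carrier ev r])
      finally show ?thesis unfolding Y_def using ij by (simp add: unvecf_entry)
    qed
    have qfeq: "qf d Y (mv d A a) b + qf d Y a (mv d A b) + (\<Sum>k\<in>{1..m}. qf d Y (mv d (B k) a) (mv d (B k) b)) = \<mu> * qf d Y a b" for a b
    proof -
      have "(\<Sum>i<d. \<Sum>j<d. cnj (a i) * Gent Y i j * b j) = (\<Sum>i<d. \<Sum>j<d. \<mu> * (cnj (a i) * Y$$(i,j) * b j))"
        by (intro sum.cong refl) (simp add: GY)
      also have "\<dots> = \<mu> * qf d Y a b" unfolding qf_def by (simp add: sum_distrib_left)
      finally show ?thesis unfolding Gent_qf .
    qed
    have sumG: "(\<Sum>k\<in>{0..m}. qf d Y (mv d (GG t k) a) (mv d (GG t k) b))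
       = (1 + complex_of_real t * \<mu>) * qf d Y a b + complex_of_real (t\<^sup>2) * qf d Y (mv d A a) (mv d A b)" for a b
    proof -
      have g0: "qf d Y (mv d (GG t 0) a) (mv d (GG t 0) b) = qf d Y a b + complex_of_real t * qf d Y a (mv d A b)
        + complex_of_real t * qf d Y (mv d A a) b + complex_of_real (t\<^sup>2) * qf d Y (mv d A a) (mv d A b)"
      proof -
        have "qf d Y (mv d (GG t 0) a) (mv d (GG t 0) b) = qf d Y (\<lambda>i. a i + complex_of_real t * mv d A a i) (\<lambda>i. b i + complex_of_real t * mv d A b i)"
          by (intro trans[OF qf_cong_l qf_cong_r]) (simp_all add: mv_G0)
        thus ?thesis unfolding qf_lin_l qf_lin_r by (simp add: algebra_simps power2_eq_square)
      qed
      have gk: "qf d Y (mv d (GG t k) a) (mv d (GG t k) b) = complex_of_real t * qf d Y (mv d (B k) a) (mv d (B k) b)"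
        if k: "k \<in> {1..m}" for k
      proof -
        have "qf d Y (mv d (GG t k) a) (mv d (GG t k) b) = qf d Y (\<lambda>i. complex_of_real (sqrt t) * mv d (B k) a i) (\<lambda>i. complex_of_real (sqrt t) * mv d (B k) b i)"
          using k by (intro trans[OF qf_cong_l qf_cong_r]) (simp_all add: mv_Gk)
        thus ?thesis unfolding qf_scale using tpos by simp
      qed
      have "(\<Sum>k\<in>{0..m}. qf d Y (mv d (GG t k) a) (mv d (GG t k) b))
        = qf d Y a b + complex_of_real t * qf d Y a (mv d A b)
        + complex_of_real t * qf d Y (mv d A a) b + complex_of_real (t\<^sup>2) * qf d Y (mv d A a) (mv d A b)
        + complex_of_real t * (\<Sum>k\<in>{1..m}. qf d Y (mv d (B k) a) (mv d (B k) b))"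
        unfolding sum_0m g0 by (simp add: gk sum_distrib_left)
      also have "\<dots> = qf d Y a b + complex_of_real t * (qf d Y (mv d A a) b + qf d Y a (mv d A b) + (\<Sum>k\<in>{1..m}. qf d Y (mv d (B k) a) (mv d (B k) b)))
        + complex_of_real (t\<^sup>2) * qf d Y (mv d A a) (mv d A b)"
        by (simp add: algebra_simps)
      also have "\<dots> = (1 + complex_of_real t * \<mu>) * qf d Y a b + complex_of_real (t\<^sup>2) * qf d Y (mv d A a) (mv d A b)"
        unfolding qfeq by (simp add: algebra_simps)
      finally show ?thesis .
    qed
    define \<beta>t where "\<beta>t = 1 + t * ?\<beta> + t\<^sup>2 * KA"
    have bt: "\<beta>t \<ge> 0" unfolding \<beta>t_def using bt0 KA0 by (simp add: add_nonneg_nonneg less_imp_le)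
    have nsqG: "(\<Sum>k\<in>{0..m}. nsq d (mv d (GG t k) a)) \<le> \<beta>t * nsq d a" for a
    proof -
      have n0: "nsq d (mv d (GG t 0) a) = nsq d a + 2 * t * Re (\<Sum>i<d. cnj (a i) * mv d A a i) + t\<^sup>2 * nsq d (mv d A a)"
        unfolding nsq_lin[symmetric] by (rule nsq_cong) (simp add: mv_G0)
      have nk: "nsq d (mv d (GG t k) a) = t * nsq d (mv d (B k) a)" if k: "k \<in> {1..m}" for k
      proof -
        have "nsq d (mv d (GG t k) a) = nsq d (\<lambda>i. complex_of_real (sqrt t) * mv d (B k) a i)"
          using k by (intro nsq_cong) (simp add: mv_Gk)
        thus ?thesis unfolding nsq_scale using tpos by simp
      qed
      have "(\<Sum>k\<in>{0..m}. nsq d (mv d (GG t k) a)) = nsq d a + t * Re (qf d MM a a) + t\<^sup>2 * nsq d (mv d A a)"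
        unfolding sum_0m n0 M_Re by (simp add: nk sum_distrib_left algebra_simps)
      also have "\<dots> \<le> nsq d a + t * (?\<beta> * nsq d a) + t\<^sup>2 * (KA * nsq d a)"
        using herm_rayleigh(2)[OF M_carrier M_herm d, of a] mv_bound[of d A a] tpos
        unfolding KA_def by (intro add_mono mult_left_mono) auto
      also have "\<dots> = \<beta>t * nsq d a" unfolding \<beta>t_def by (simp add: algebra_simps)
      finally show ?thesis .
    qed
    define q where "q = (\<beta>t + t\<^sup>2 * KA) / (1 + t * Re \<mu>)"
    have den: "1 + t * Re \<mu> > 0" using bt0 mult_strict_left_mono[OF gt tpos] by linarith
    have q: "0 \<le> q" "q < 1"
    proof -
      show "0 \<le> q" unfolding q_def using bt KA0 den by simp
      have "\<beta>t + t\<^sup>2 * KA = 1 + t * ?\<beta> + t * (2 * t * KA)" unfolding \<beta>t_def by (simp add: power2_eq_square algebra_simps)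
      also have "\<dots> < 1 + t * ?\<beta> + t * \<delta>" using t2 tpos by simp
      also have "\<dots> = 1 + t * Re \<mu>" unfolding \<delta>_def by (simp add: algebra_simps)
      finally show "q < 1" unfolding q_def using den by simp
    qed
    have step: "bnd d Y (q * c)" if c: "c \<ge> 0" "bnd d Y c" for c
      unfolding bnd_def
    proof (intro allI)
      fix a b
      have k1: "cmod (\<Sum>k\<in>{0..m}. qf d Y (mv d (GG t k) a) (mv d (GG t k) b)) \<le> c * \<beta>t * sqrt (nsq d a) * sqrt (nsq d b)"
        by (rule kraus_bound[OF _ nsqG bt c(2) c(1)]) simp
      have k2: "cmod (qf d Y (mv d A a) (mv d A b)) \<le> c * KA * sqrt (nsq d a) * sqrt (nsq d b)"
      proof -
        have "cmod (qf d Y (mv d A a) (mv d A b)) \<le> c * sqrt (nsq d (mv d A a)) * sqrt (nsq d (mv d A b))"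
          using c(2) unfolding bnd_def by blast
        also have "\<dots> \<le> c * sqrt (KA * nsq d a) * sqrt (KA * nsq d b)"
          using mv_bound[of d A a, folded KA_def] mv_bound[of d A b, folded KA_def] c(1) KA0
          by (intro mult_mono mult_left_mono real_sqrt_le_mono) (auto simp: nsq_nonneg)
        also have "\<dots> = c * KA * sqrt (nsq d a) * sqrt (nsq d b)"
        proof -
          have "sqrt (KA * nsq d a) * sqrt (KA * nsq d b) = (sqrt KA * sqrt KA) * (sqrt (nsq d a) * sqrt (nsq d b))"
            by (simp add: real_sqrt_mult mult_ac)
          also have "sqrt KA * sqrt KA = KA" using KA0 by simp
          finally show ?thesis by (simp add: mult_ac)
        qed
        finally show ?thesis .
      qed
      have "(1 + t * Re \<mu>) * cmod (qf d Y a b) \<le> cmod (1 + complex_of_real t * \<mu>) * cmod (qf d Y a b)"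
        using complex_Re_le_cmod[of "1 + complex_of_real t * \<mu>"] by (intro mult_right_mono) auto
      also have "\<dots> = cmod ((1 + complex_of_real t * \<mu>) * qf d Y a b)" by (simp add: norm_mult)
      also have "\<dots> \<le> cmod (\<Sum>k\<in>{0..m}. qf d Y (mv d (GG t k) a) (mv d (GG t k) b)) + cmod (complex_of_real (t\<^sup>2) * qf d Y (mv d A a) (mv d A b))"
      proof -
        have eqX: "(1 + complex_of_real t * \<mu>) * qf d Y a b = (\<Sum>k\<in>{0..m}. qf d Y (mv d (GG t k) a) (mv d (GG t k) b)) - complex_of_real (t\<^sup>2) * qf d Y (mv d A a) (mv d A b)"
          unfolding sumG by simp
        show ?thesis unfolding eqX by (rule norm_triangle_ineq4)
      qed
      also have "\<dots> \<le> c * \<beta>t * sqrt (nsq d a) * sqrt (nsq d b) + t\<^sup>2 * (c * KA * sqrt (nsq d a) * sqrt (nsq d b))"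
        using k1 k2 by (intro add_mono) (auto simp: norm_mult norm_power intro!: mult_left_mono)
      also have "\<dots> = (\<beta>t + t\<^sup>2 * KA) * c * sqrt (nsq d a) * sqrt (nsq d b)" by (simp add: algebra_simps)
      finally have "(1 + t * Re \<mu>) * cmod (qf d Y a b) \<le> (\<beta>t + t\<^sup>2 * KA) * c * sqrt (nsq d a) * sqrt (nsq d b)" .
      hence "cmod (qf d Y a b) \<le> ((\<beta>t + t\<^sup>2 * KA) * c * sqrt (nsq d a) * sqrt (nsq d b)) / (1 + t * Re \<mu>)"
        using den by (simp add: le_divide_eq mult.commute)
      thus "cmod (qf d Y a b) \<le> q * c * sqrt (nsq d a) * sqrt (nsq d b)" unfolding q_def by (simp add: field_simps)
    qed
    from unvecf_nonzero[OF x] obtain i j where ij: "i < d" "j < d" "Y $$ (i,j) \<noteq> 0" unfolding Y_def by auto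
    have "Y $$ (i,j) = 0" by (rule decay[OF bnd_init bnd_nonneg_init step q ij(1,2)])
    with ij(3) show False by simp
  qed
  have fin: "finite (Re ` spectrum CC)" using card_finite_spectrum(1)[OF C_carrier] by auto
  have ne: "Re ` spectrum CC \<noteq> {}" using spectrum_non_empty[OF C_carrier dd] by auto
  show ?thesis unfolding spectral_abscissa_def[of CC] using fin ne main by (simp add: Max_le_iff)
qed

end


definition adjm :: "nat \<Rightarrow> complex mat \<Rightarrow> complex mat" where
  "adjm d Y = mat d d (\<lambda>(i,j). cnj (Y $$ (j,i)))"

lemma qf_herm_conj: assumes h: "herm d X" shows "cnj (qf d X a b) = qf d X b a"
proof -
  have "cnj (qf d X a b) = (\<Sum>i<d. cnj (mv d X b i) * a i)" unfolding qf_mv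
    by (simp add: mult.commute)
  also have "\<dots> = qf d X b a" unfolding qf_mv by (rule herm_swap[OF h])
  finally show ?thesis .
qed

lemma Lst_cong: "(\<And>i j. i < d \<Longrightarrow> j < d \<Longrightarrow> X $$ (i,j) = Y $$ (i,j)) \<Longrightarrow> Lst d F S X i j = Lst d F S Y i j"
  unfolding Lst_def by (intro sum.cong refl) auto

lemma Lst_adj: assumes ij: "i < d" "j < d"
  shows "Lst d F S (adjm d Y) i j = cnj (Lst d F S Y j i)"
proof -
  have "Lst d F S (adjm d Y) i j = (\<Sum>k\<in>S. \<Sum>p<d. \<Sum>q<d. cnj (F k$$(p,i)) * cnj (Y $$ (q,p)) * F k$$(q,j))"
    unfolding Lst_def adjm_def by (intro sum.cong refl) auto
  also have "\<dots> = (\<Sum>k\<in>S. \<Sum>q<d. \<Sum>p<d. cnj (F k$$(p,i)) * cnj (Y $$ (q,p)) * F k$$(q,j))"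
    by (rule sum.cong[OF refl], rule sum.swap)
  also have "\<dots> = cnj (Lst d F S Y j i)" unfolding Lst_def by (simp add: mult_ac)
  finally show ?thesis .
qed

context kr begin

lemma Gent_cong: assumes "\<And>i j. i < d \<Longrightarrow> j < d \<Longrightarrow> X $$ (i,j) = Y $$ (i,j)" "i < d" "j < d"
  shows "Gent X i j = Gent Y i j"
  unfolding Gent_def using Lst_cong[of d X Y] assms by (auto intro!: sum.cong arg_cong2[where f = "(+)"])

lemma Gent_adj: assumes ij: "i < d" "j < d"
  shows "Gent (adjm d Y) i j = cnj (Gent Y j i)"
proof -
  have "(\<Sum>p<d. cnj (A$$(p,i)) * adjm d Y $$(p,j)) = cnj (\<Sum>q<d. Y$$(j,q) * A$$(q,i))"
    unfolding adjm_def using ij by (simp add: mult.commute)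
  moreover have "(\<Sum>q<d. adjm d Y $$(i,q) * A$$(q,j)) = cnj (\<Sum>p<d. cnj (A$$(p,j)) * Y$$(p,i))"
    unfolding adjm_def using ij by (simp add: mult.commute)
  ultimately show ?thesis unfolding Gent_def Lst_adj[OF ij] by simp
qed

lemma eig_qf: assumes X: "X \<in> carrier_mat d d" and ev: "eigenvector X v x"
  shows "qf d X u (($) v) = x * qf d (1\<^sub>m d) u (($) v)"
proof -
  have "qf d X u (($) v) = (\<Sum>i<d. cnj (u i) * (x * v$i))" unfolding qf_mv
    by (intro sum.cong refl) (simp add: eig_entry[OF X ev])
  also have "\<dots> = x * qf d (1\<^sub>m d) u (($) v)" by (simp add: qf_one sum_distrib_left mult_ac)
  finally show ?thesis .
qed

end


context kr begin

definition "TT c0 = mat (d*d) (d*d) (\<lambda>(r,s). (if r = s then complex_of_real c0 else 0) - transpose_mat CC $$ (r,s))"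

lemma T_carrier: "TT c0 \<in> carrier_mat (d*d) (d*d)" unfolding TT_def by auto

lemma mv_T: assumes r: "r < d*d"
  shows "mv (d*d) (TT c0) u r = complex_of_real c0 * u r - mv (d*d) (transpose_mat CC) u r"
proof -
  have "mv (d*d) (TT c0) u r = (\<Sum>c<d*d. (if c = r then complex_of_real c0 * u c else 0) - transpose_mat CC $$ (r,c) * u c)"
    unfolding mv_def TT_def using r by (intro sum.cong refl) (auto simp: algebra_simps)
  thus ?thesis using r unfolding mv_def by (simp add: sum_subtractf)
qed

lemma T_Y: assumes ij: "i < d" "j < d"
  shows "mv (d*d) (TT c0) z (i*d+j) = complex_of_real c0 * unvecf d z $$ (i,j) - Gent (unvecf d z) i j"
  using mv_T[OF lt_pd[OF ij]] CT_mv[OF ij] unvecf_entry[OF ij] by simp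

lemma herm_one: "herm d (1\<^sub>m d)" unfolding herm_def by simp

lemma C_lower: assumes d: "d > 0" shows "spectral_min_re MM \<le> spectral_abscissa CC"
proof (rule ccontr)
  let ?l = "spectral_min_re MM" and ?\<beta> = "spectral_abscissa MM" and ?CT = "transpose_mat CC"
  assume "\<not> ?thesis" hence lt: "spectral_abscissa CC < ?l" by simp
  have dd: "d*d > 0" using d by simp
  have finC: "finite (Re ` spectrum CC)" using card_finite_spectrum(1)[OF C_carrier] by auto
  have reC: "Re \<mu> < ?l" if "\<mu> \<in> spectrum ?CT" for \<mu>
  proof -
    have "\<mu> \<in> spectrum CC" using that spectrum_transpose[OF C_carrier] by simp
    hence "Re \<mu> \<le> spectral_abscissa CC" unfolding spectral_abscissa_def using finC by (intro Max_ge) auto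
    thus ?thesis using lt by simp
  qed
  have lb: "?l \<le> ?\<beta>"
    using herm_rayleigh[OF M_carrier M_herm d, of "ev 0"] nsq_ev[OF d] by simp
  define c0 where "c0 = ?\<beta> + 1"
  have c0l: "c0 - ?l > 0" unfolding c0_def using lb by simp
  let ?T = "TT c0"
  have T: "?T \<in> carrier_mat (d*d) (d*d)" by (rule T_carrier)
  have detT: "det ?T \<noteq> 0"
  proof
    assume "det ?T = 0"
    from this[unfolded det_0_iff_vec_prod_zero[OF T]] obtain v where
      v: "v \<in> carrier_vec (d*d)" "v \<noteq> 0\<^sub>v (d*d)" "?T *\<^sub>v v = 0\<^sub>v (d*d)" by auto
    have "?CT *\<^sub>v v = complex_of_real c0 \<cdot>\<^sub>v v"
    proof (intro eq_vecI)
      fix r assume "r < dim_vec (complex_of_real c0 \<cdot>\<^sub>v v)" hence r: "r < d*d" using v by auto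
      have "mv (d*d) ?T (($) v) r = 0" using arg_cong[OF v(3), of "\<lambda>w. w $ r"] mv_vec[OF T v(1) r] r by simp
      hence "mv (d*d) ?CT (($) v) r = complex_of_real c0 * v $ r" unfolding mv_T[OF r] by simp
      thus "(?CT *\<^sub>v v) $ r = (complex_of_real c0 \<cdot>\<^sub>v v) $ r" using mv_vec[OF CT_carrier v(1) r] r v by simp
    qed (use v CT_carrier in auto)
    hence "eigenvector ?CT v (complex_of_real c0)" using v CT_carrier unfolding eigenvector_def by auto
    hence "complex_of_real c0 \<in> spectrum ?CT" unfolding spectrum_def eigenvalue_def by auto
    from reC[OF this] c0l show False by simp
  qed
  from det_non_zero_imp_unit[OF T detT, of undefined] obtain R where R: "R \<in> carrier_mat (d*d) (d*d)"
    and RT: "R * ?T = 1\<^sub>m (d*d)" and TR: "?T * R = 1\<^sub>m (d*d)"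
    unfolding Units_def ring_mat_def by auto
  define r where "r = 1 / (c0 - ?l)"
  have rpos: "r > 0" unfolding r_def using c0l by simp
  have mvTR: "mv (d*d) ?T (mv (d*d) R u) s = u s" if "s < d*d" for u s
    using mv_mult[OF T R that, of u, symmetric] TR mv_one[OF that] by simp
  have mvRT: "mv (d*d) R (mv (d*d) ?T u) s = u s" if "s < d*d" for u s
    using mv_mult[OF R T that, of u, symmetric] RT mv_one[OF that] by simp
  have srR: "spectral_radius R < r"
  proof -
    from spectral_radius_mem_max(1)[OF R dd] obtain \<nu> where nu: "\<nu> \<in> spectrum R"
      and eq: "spectral_radius R = cmod \<nu>" by auto
    from nu obtain w where ev: "eigenvector R w \<nu>" unfolding spectrum_def eigenvalue_def by auto
    from ev R have w: "w \<in> carrier_vec (d*d)" "w \<noteq> 0\<^sub>v (d*d)" unfolding eigenvector_def by auto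
    have Rw: "mv (d*d) R (($) w) s = \<nu> * w $ s" if "s < d*d" for s by (rule eig_entry[OF R ev that])
    have wT: "w $ s = \<nu> * mv (d*d) ?T (($) w) s" if s: "s < d*d" for s
    proof -
      have "w $ s = mv (d*d) ?T (mv (d*d) R (($) w)) s" using mvTR[OF s] by simp
      also have "\<dots> = mv (d*d) ?T (\<lambda>s. \<nu> * w $ s) s" by (rule mv_cong) (simp add: Rw)
      also have "\<dots> = \<nu> * mv (d*d) ?T (($) w) s" unfolding mv_def by (simp add: sum_distrib_left mult_ac)
      finally show ?thesis .
    qed
    have nu0: "\<nu> \<noteq> 0"
    proof
      assume "\<nu> = 0" hence "w $ s = 0" if "s < d*d" for s using wT[OF that] by simp
      hence "w = 0\<^sub>v (d*d)" using w by (intro eq_vecI) auto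
      with w show False by simp
    qed
    define \<mu> where "\<mu> = complex_of_real c0 - 1 / \<nu>"
    have "?CT *\<^sub>v w = \<mu> \<cdot>\<^sub>v w"
    proof (intro eq_vecI)
      fix s assume "s < dim_vec (\<mu> \<cdot>\<^sub>v w)" hence s: "s < d*d" using w by auto
      have "mv (d*d) ?T (($) w) s = w $ s / \<nu>" using wT[OF s] nu0 by (simp add: field_simps)
      hence "mv (d*d) ?CT (($) w) s = \<mu> * w $ s" using mv_T[OF s, of c0 "($) w"] unfolding \<mu>_def
        by (simp add: field_simps)
      thus "(?CT *\<^sub>v w) $ s = (\<mu> \<cdot>\<^sub>v w) $ s" using mv_vec[OF CT_carrier w(1) s] s w by simp
    qed (use w CT_carrier in auto)
    hence "eigenvector ?CT w \<mu>" using w CT_carrier unfolding eigenvector_def by auto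
    hence "\<mu> \<in> spectrum ?CT" unfolding spectrum_def eigenvalue_def by auto
    from reC[OF this] have "Re \<mu> < ?l" .
    hence "Re (1/\<nu>) > c0 - ?l" unfolding \<mu>_def by simp
    hence "cmod (1/\<nu>) > c0 - ?l" using complex_Re_le_cmod[of "1/\<nu>"] by linarith
    hence "1 / cmod \<nu> > c0 - ?l" by (simp add: norm_divide)
    hence "(c0 - ?l) * cmod \<nu> < 1" using nu0 by (simp add: field_simps)
    hence "cmod \<nu> < r" unfolding r_def using c0l by (simp add: field_simps)
    thus ?thesis using eq by simp
  qed
  have rR0: "spectral_radius R \<ge> 0" using spectral_radius_mem_max(1)[OF R dd] by auto
  define r' where "r' = (spectral_radius R + r) / 2"
  have r': "r' > 0" "r' < r" "spectral_radius R < r'" unfolding r'_def using srR rR0 by auto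
  define x0 where "x0 = (\<lambda>s. if s div d = s mod d then 1 else 0 :: complex)"
  from growth_vec[OF R r'(3) r'(1), of x0] obtain c where
    c: "\<And>k s. s < d*d \<Longrightarrow> cmod (mv (d*d) (R ^\<^sub>m k) x0 s) \<le> c * r'^k" by blast
  define z where "z k = mv (d*d) (R ^\<^sub>m k) x0" for k
  define Y where "Y k = unvecf d (z k)" for k
  have zS: "z (Suc k) s = mv (d*d) R (z k) s" if "s < d*d" for k s
    unfolding z_def pow_Suc'[OF R] using mv_mult[OF R _ that] R by auto
  have Tz: "mv (d*d) ?T (z (Suc k)) s = z k s" if s: "s < d*d" for k s
  proof -
    have "mv (d*d) ?T (z (Suc k)) s = mv (d*d) ?T (mv (d*d) R (z k)) s" by (rule mv_cong) (simp add: zS)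
    also have "\<dots> = z k s" by (rule mvTR[OF s])
    finally show ?thesis .
  qed
  have rec: "complex_of_real c0 * Y (Suc k) $$ (i,j) - Gent (Y (Suc k)) i j = Y k $$ (i,j)" if ij: "i < d" "j < d" for k i j
    using T_Y[OF ij, of c0 "z (Suc k)"] Tz[OF lt_pd[OF ij], of k] unfolding Y_def using unvecf_entry[OF ij] by simp
  have uniq: "u s = u' s" if "\<And>s. s < d*d \<Longrightarrow> mv (d*d) ?T u s = mv (d*d) ?T u' s" "s < d*d" for u u' s
  proof -
    have "u s = mv (d*d) R (mv (d*d) ?T u) s" using mvRT[OF that(2)] by simp
    also have "\<dots> = mv (d*d) R (mv (d*d) ?T u') s" by (rule mv_cong) (use that(1) in auto)
    also have "\<dots> = u' s" by (rule mvRT[OF that(2)])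
    finally show ?thesis .
  qed
  have Y0: "Y 0 $$ (i,j) = 1\<^sub>m d $$ (i,j)" if ij: "i < d" "j < d" for i j
  proof -
    have "Y 0 $$ (i,j) = z 0 (i*d+j)" unfolding Y_def using ij by (simp add: unvecf_entry)
    also have "\<dots> = x0 (i*d+j)" unfolding z_def using R lt_pd[OF ij] by (simp add: mv_one)
    also have "\<dots> = 1\<^sub>m d $$ (i,j)" unfolding x0_def using ij by (simp add: divmod_pd)
    finally show ?thesis .
  qed
  have Ycar: "Y k \<in> carrier_mat d d" for k unfolding Y_def unvecf_def by auto
  have claim: "herm d (Y k) \<and> (\<forall>a. Re (qf d (Y k) a a) \<ge> r^k * nsq d a)" for k
  proof (induct k)
    case 0
    have h: "herm d (Y 0)" unfolding herm_def by (simp add: Y0)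
    have "qf d (Y 0) a a = qf d (1\<^sub>m d) a a" for a by (rule qf_cong, rule Y0)
    thus ?case using h by (simp add: qf_one_nsq)
  next
    case (Suc k)
    from Suc have hk: "herm d (Y k)" and lk: "\<And>a. Re (qf d (Y k) a a) \<ge> r^k * nsq d a" by auto
    let ?X = "Y (Suc k)"
    define W where "W = adjm d ?X"
    define w where "w s = W $$ (s div d, s mod d)" for s
    have Ww: "unvecf d w $$ (i,j) = W $$ (i,j)" if "i < d" "j < d" for i j
      unfolding w_def using that by (simp add: unvecf_entry divmod_pd)
    have Tw: "mv (d*d) ?T w s = mv (d*d) ?T (z (Suc k)) s" if s: "s < d*d" for s
    proof -
      define i where "i = s div d"
      define j where "j = s mod d"
      have ij: "i < d" "j < d" using div_lt[OF s] unfolding i_def j_def by auto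
      have seq: "s = i*d+j" unfolding i_def j_def by simp
      have "mv (d*d) ?T w s = complex_of_real c0 * W $$ (i,j) - Gent W i j"
        unfolding seq T_Y[OF ij] Ww[OF ij] using Gent_cong[OF Ww ij] by simp
      also have "\<dots> = cnj (complex_of_real c0 * ?X $$ (j,i) - Gent ?X j i)"
        unfolding W_def Gent_adj[OF ij] using ij by (simp add: adjm_def)
      also have "\<dots> = cnj (Y k $$ (j,i))" using rec[OF ij(2,1), of k] by simp
      also have "\<dots> = Y k $$ (i,j)" using hk ij unfolding herm_def by (metis complex_cnj_cnj)
      also have "\<dots> = mv (d*d) ?T (z (Suc k)) s"
        unfolding seq using Tz[OF lt_pd[OF ij], of k] unfolding Y_def by (simp add: unvecf_entry[OF ij])
      finally show ?thesis .
    qed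
    have hX: "herm d ?X" unfolding herm_def
    proof (intro allI impI)
      fix i j assume ij: "i < d" "j < d"
      have "w (i*d+j) = z (Suc k) (i*d+j)" by (rule uniq[OF Tw lt_pd[OF ij]])
      hence "W $$ (i,j) = ?X $$ (i,j)" unfolding w_def Y_def using ij by (simp add: divmod_pd unvecf_entry)
      thus "?X $$ (i,j) = cnj (?X $$ (j,i))" unfolding W_def adjm_def using ij by simp
    qed
    let ?x = "spectral_min_re ?X"
    obtain v where ev: "eigenvector ?X v (complex_of_real ?x)" using min_eig_exists[OF Ycar hX d] by auto
    let ?v = "($) v"
    have vpos: "nsq d ?v > 0" by (rule eig_nsq_pos[OF Ycar ev])
    have Xlow: "?x * nsq d a \<le> Re (qf d ?X a a)" for a by (rule herm_rayleigh(1)[OF Ycar hX d])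
    have qYk: "qf d (Y k) ?v ?v = complex_of_real c0 * qf d ?X ?v ?v - (qf d ?X (mv d A ?v) ?v + qf d ?X ?v (mv d A ?v)
       + (\<Sum>k'\<in>{1..m}. qf d ?X (mv d (B k') ?v) (mv d (B k') ?v)))"
    proof -
      have "qf d (Y k) ?v ?v = (\<Sum>i<d. \<Sum>j<d. cnj (?v i) * (complex_of_real c0 * ?X $$ (i,j) - Gent ?X i j) * ?v j)"
        unfolding qf_def by (intro sum.cong refl) (simp add: rec)
      also have "\<dots> = complex_of_real c0 * qf d ?X ?v ?v - (\<Sum>i<d. \<Sum>j<d. cnj (?v i) * Gent ?X i j * ?v j)"
        unfolding qf_def by (simp add: algebra_simps sum_subtractf sum_distrib_left)
      finally show ?thesis unfolding Gent_qf .
    qed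
    have e1: "qf d ?X ?v ?v = complex_of_real (?x * nsq d ?v)" using eig_qf[OF Ycar ev, of ?v] by (simp add: qf_one_nsq)
    have e2: "qf d ?X (mv d A ?v) ?v = complex_of_real ?x * qf d (1\<^sub>m d) (mv d A ?v) ?v" by (rule eig_qf[OF Ycar ev])
    have e3: "qf d ?X ?v (mv d A ?v) = complex_of_real ?x * qf d (1\<^sub>m d) ?v (mv d A ?v)"
    proof -
      have "qf d ?X ?v (mv d A ?v) = cnj (qf d ?X (mv d A ?v) ?v)" using qf_herm_conj[OF hX] by simp
      also have "\<dots> = complex_of_real ?x * cnj (qf d (1\<^sub>m d) (mv d A ?v) ?v)" unfolding e2 by simp
      also have "cnj (qf d (1\<^sub>m d) (mv d A ?v) ?v) = qf d (1\<^sub>m d) ?v (mv d A ?v)" by (rule qf_herm_conj[OF herm_one])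
      finally show ?thesis .
    qed
    have e4: "Re (\<Sum>k'\<in>{1..m}. qf d ?X (mv d (B k') ?v) (mv d (B k') ?v)) \<ge> ?x * (\<Sum>k'\<in>{1..m}. nsq d (mv d (B k') ?v))"
      unfolding Re_sum sum_distrib_left by (intro sum_mono Xlow)
    have Mv: "Re (qf d MM ?v ?v) = Re (qf d (1\<^sub>m d) (mv d A ?v) ?v + qf d (1\<^sub>m d) ?v (mv d A ?v)) + (\<Sum>k'\<in>{1..m}. nsq d (mv d (B k') ?v))"
      unfolding M_qf by (simp add: qf_one_nsq)
    have key: "Re (qf d (Y k) ?v ?v) \<le> ?x * (c0 * nsq d ?v - Re (qf d MM ?v ?v))"
    proof -
      have "Re (qf d (Y k) ?v ?v) = c0 * (?x * nsq d ?v) - ?x * Re (qf d (1\<^sub>m d) (mv d A ?v) ?v + qf d (1\<^sub>m d) ?v (mv d A ?v))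
          - Re (\<Sum>k'\<in>{1..m}. qf d ?X (mv d (B k') ?v) (mv d (B k') ?v))"
        unfolding qYk e1 e2 e3 by (simp add: algebra_simps)
      also have "\<dots> \<le> c0 * (?x * nsq d ?v) - ?x * Re (qf d (1\<^sub>m d) (mv d A ?v) ?v + qf d (1\<^sub>m d) ?v (mv d A ?v))
          - ?x * (\<Sum>k'\<in>{1..m}. nsq d (mv d (B k') ?v))" using e4 by simp
      also have "\<dots> = ?x * (c0 * nsq d ?v - Re (qf d MM ?v ?v))" unfolding Mv by (simp add: algebra_simps)
      finally show ?thesis .
    qed
    have Mlow: "?l * nsq d ?v \<le> Re (qf d MM ?v ?v)" and Mup: "Re (qf d MM ?v ?v) \<le> ?\<beta> * nsq d ?v"
      using herm_rayleigh[OF M_carrier M_herm d, of ?v] by auto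
    have pos: "r^k * nsq d ?v > 0" using rpos vpos by simp
    have fpos: "c0 * nsq d ?v - Re (qf d MM ?v ?v) \<ge> nsq d ?v" using Mup unfolding c0_def by (simp add: algebra_simps)
    have xpos: "?x > 0"
    proof (rule ccontr)
      assume "\<not> ?x > 0" hence "?x \<le> 0" by simp
      hence "?x * (c0 * nsq d ?v - Re (qf d MM ?v ?v)) \<le> 0" using fpos vpos
        by (intro mult_nonpos_nonneg) auto
      with key lk[of ?v] pos show False by linarith
    qed
    have "r^k * nsq d ?v \<le> ?x * (c0 * nsq d ?v - Re (qf d MM ?v ?v))" using key lk[of ?v] by linarith
    also have "\<dots> \<le> ?x * ((c0 - ?l) * nsq d ?v)" using xpos Mlow by (intro mult_left_mono) (auto simp: algebra_simps)
    finally have "r^k \<le> ?x * (c0 - ?l)" using vpos by (simp add: mult.assoc)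
    hence xge: "r^Suc k \<le> ?x" unfolding r_def using c0l by (simp add: field_simps)
    have "\<forall>a. Re (qf d ?X a a) \<ge> r^Suc k * nsq d a"
    proof
      fix a
      have "r^Suc k * nsq d a \<le> ?x * nsq d a" using xge by (intro mult_right_mono nsq_nonneg)
      thus "Re (qf d ?X a a) \<ge> r^Suc k * nsq d a" using Xlow[of a] by linarith
    qed
    with hX show ?case by simp
  qed
  have "r^k \<le> c * r'^k" for k
  proof -
    have "r^k = r^k * nsq d (ev 0)" using nsq_ev[OF d] by simp
    also have "\<dots> \<le> Re (qf d (Y k) (ev 0) (ev 0))" using claim[of k] by auto
    also have "\<dots> \<le> cmod (Y k $$ (0,0))" using qf_ev[OF d d] complex_Re_le_cmod by simp
    also have "Y k $$ (0,0) = z k 0" unfolding Y_def using d by (simp add: unvecf_entry)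
    also have "cmod (z k 0) \<le> c * r'^k" unfolding z_def using c dd by auto
    finally show ?thesis .
  qed
  from arch_contra[OF this r'(1) r'(2)] show False .
qed

end

theorem theorem1p1:
  fixes A :: "complex mat" and B :: "nat \<Rightarrow> complex mat" and d m :: nat
  assumes "d > 0" and "A \<in> carrier_mat d d"
    and "\<And>k. k \<in> {1..m} \<Longrightarrow> B k \<in> carrier_mat d d"
  defines "D \<equiv> kron (mat_conj A) A
               + msum (d*d) (\<lambda>k. kron (mat_conj (B k)) (B k)) {1..m}"
    and "C \<equiv> kron (mat_conj A) (1\<^sub>m d) + kron (1\<^sub>m d) A
               + msum (d*d) (\<lambda>k. kron (mat_conj (B k)) (B k)) {1..m}"
    and "N \<equiv> mat_adjoint A * A + msum d (\<lambda>k. mat_adjoint (B k) * B k) {1..m}"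
    and "M \<equiv> A + mat_adjoint A + msum d (\<lambda>k. mat_adjoint (B k) * B k) {1..m}"
  shows "spectral_min_re N \<le> spectral_radius D \<and> spectral_radius D \<le> spectral_abscissa N
       \<and> spectral_min_re M \<le> spectral_abscissa C \<and> spectral_abscissa C \<le> spectral_abscissa M"
  proof -
  interpret kr A B d m using assms(2,3) by unfold_locales auto
  have eqs: "D = DD" "C = CC" "N = NN" "M = MM"
    unfolding D_def DD_def C_def CC_def N_def NN_def M_def MM_def by simp_all
  show ?thesis unfolding eqs
    using D_lower[OF assms(1)] D_upper[OF assms(1)] C_lower[OF assms(1)] C_upper[OF assms(1)] by simp
qed

end
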